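(* Let $\Theta$ be an MLL proof structure. If some run of Algorithm A on input $\Theta$ terminates in Step 5 with output no, then $\Theta$ is not an MLL proof net.
   Context: MLL formulas (with a single atom $p$) are given by $F ::= p \mid p^\bot \mid F\otimes G \mid F \wp G$, where $\wp$ denotes par. MLL links are: an ID-link, with two conclusions $p$ and $p^\bot$; a $\otimes$-link, with left premise $F$, right premise $G$ and conclusion $F\otimes G$; a $\wp$-link, with left premise $F$, right premise $G$ and conclusion $F\wp G$. An MLL proof structure $\Theta$ is a finite set of links such that each conclusion of a link is a premise of at most one other link, and each premise of a link is a conclusion of exactly one other link; a conclusion of $\Theta$ is a formula occurrence that is not a premise of any link. MLL proof nets are defined inductively: a single ID-link is a proof net; if $\Theta_1,\Theta_2$ are disjoint proof nets with conclusions $F$, $G$, adding a $\otimes$-link with premises $F,G$ gives a proof net; if $\Theta$ is a proof net with conclusions $F,G$, adding a $\wp$-link with left premise $F$ and right premise $G$ gives a proof net. Extreme-left DR-graph $S_{\forall\ell}(\Theta)$: the undirected graph on formula occurrences in which each ID-link joins its two conclusions, each $\otimes$-link joins its conclusion to both premises, and each $\wp$-link joins its conclusion to its left premise only. deNM-trees: finite trees with labeled nodes (carrying a label set of symbols $\ell_L$, $r_L$, $L$ a $\wp$-link) and $\wp$-nodes (labeled by a $\wp$-link $L$, of degree 1 or 2, with a port "above" and a port "below"; a degree-1 $\wp$-node is attached only through its port above). Translation $T(\Theta)$ (undefined unless $S_{\forall\ell}(\Theta)$ is a tree). If $\Theta$ is a single ID-link, $T(\Theta)$ is one degree-0 labeled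 node with label set $\emptyset$. Otherwise each link $L$ gives a piece: (i) ID-link, case 1: one conclusion $F$ is the right premise of a $\wp$-link $L'$ or a conclusion of $\Theta$; if $F^\bot$ is a premise of a $\wp$-link, $T(\Theta)$ is undefined; otherwise a degree-1 labeled node attached to the piece of the link having $F^\bot$ as premise, labeled $\{r_{L'}\}$ if $F$ is the right premise of $L'$ and $\emptyset$ otherwise. Case 2 (otherwise): if both conclusions are premises of $\wp$-links, undefined; otherwise a degree-2 labeled node attached to the pieces of the links having the conclusions as premises, labeled $\{\ell_{L'}\}$ if a conclusion is the left premise of a $\wp$-link $L'$, else $\emptyset$. (ii) $\otimes$-link, case 1 (conclusion is a conclusion of $\Theta$ or right premise of a $\wp$-link $L'$): a degree-2 labeled node attached to the pieces of the links producing its premises, labeled $\{r_{L'}\}$ or $\emptyset$ accordingly; case 2 (otherwise): a degree-3 labeled node attached additionally to the piece of the link having its conclusion as premise, labeled $\{\ell_{L'}\}$ if the conclusion is the left premise of a $\wp$-link $L'$, else $\emptyset$. (iii) $\wp$-link $L$: a $\wp$-node $n_L$ whose port above is attached to the piece of the link producing the left premise of $L$; case 1 (conclusion is the right premise of $\wp$-link $L'$): port below attached to a degree-1 labeled node labeled $\{r_{L'}\}$; case 2 (conclusion is the left premise of $\wp$-link $L'$): port below attached to a degree-2 labeled node labeled $\{\ell_{L'}\}$ which is attached to the port above of $n_{L'}$; case 3 (otherwise): only $n_L$, of degree 1 if its conclusion is a conclusion of $\Theta$, else its port below is attached to the piece of the link having its conclusion as premise. $T(\Theta)$ connects all pieces.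 Rewriting with one designated active labeled node: ($\wp$-elimination) if the active node $n$ is adjacent to a $\wp$-node $n_L$ through $n_L$'s port above and $n$'s label set contains $\ell_L$ and $r_L$, delete $n_L$ (its neighbour through the port below, if any, becomes adjacent to $n$); (union) if the active node is adjacent to a labeled node, merge them into one active node labeled by the union of label sets; (local jump) if the active node is adjacent to a $\wp$-node $n_L$ through $n_L$'s port below, the active node becomes the labeled node whose label set contains $r_L$ (tree unchanged). $S_{\rm full}$ is the set of all $\ell_L, r_L$ for $\wp$-links $L$ of $\Theta$. Algorithm A on input $\Theta$: (1) if $T(\Theta)$ is undefined, output no; (2) select an arbitrary labeled node as active; (3) rewrite using the three rules (in any order); (4) if local jump is applied to a $\wp$-node to which it was already applied, output no; (5) when no rule applies to the current tree $T'$, output yes if $T'$ is exactly one degree-0 node with label set $S_{\rm full}$, and no otherwise. *)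

theory Defs
  imports Main
begin

datatype form = PA | NA | Tens form form | Par form form
  (* PA = atom p, NA = p^bot, Tens = tensor, Par = par *)

(* Ax a b    : ID-link with conclusions a (labelled p) and b (labelled p^bot)
   TensL a b c : tensor-link, left premise a, right premise b, conclusion c
   ParL a b c  : par-link, left premise a, right premise b, conclusion c *)
datatype 'o link = Ax 'o 'o | TensL 'o 'o 'o | ParL 'o 'o 'o

fun concl :: "'o link \<Rightarrow> 'o set" where
  "concl (Ax a b) = {a, b}"
| "concl (TensL a b c) = {c}"
| "concl (ParL a b c) = {c}"

fun prems :: "'o link \<Rightarrow> 'o set" where
  "prems (Ax a b) = {}"
| "prems (TensL a b c) = {a, b}"
| "prems (ParL a b c) = {a, b}"

fun is_par :: "'o link \<Rightarrow> bool" where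
  "is_par (ParL a b c) = True"
| "is_par _ = False"

fun is_tens :: "'o link \<Rightarrow> bool" where
  "is_tens (TensL a b c) = True"
| "is_tens _ = False"

fun wt_link :: "('o \<Rightarrow> form) \<Rightarrow> 'o link \<Rightarrow> bool" where
  "wt_link fm (Ax a b) = (fm a = PA \<and> fm b = NA)"
| "wt_link fm (TensL a b c) = (a \<noteq> b \<and> a \<noteq> c \<and> b \<noteq> c \<and> fm c = Tens (fm a) (fm b))"
| "wt_link fm (ParL a b c) = (a \<noteq> b \<and> a \<noteq> c \<and> b \<noteq> c \<and> fm c = Par (fm a) (fm b))"

definition occs :: "'o link set \<Rightarrow> 'o set" where
  "occs \<Theta> = (\<Union>L\<in>\<Theta>. concl L \<union> prems L)"

definition concls :: "'o link set \<Rightarrow> 'o set" where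
  "concls \<Theta> = {x \<in> occs \<Theta>. \<forall>L\<in>\<Theta>. x \<notin> prems L}"

definition proof_structure :: "('o \<Rightarrow> form) \<Rightarrow> 'o link set \<Rightarrow> bool" where
  "proof_structure fm \<Theta> \<longleftrightarrow>
     finite \<Theta>
   \<and> (\<forall>L\<in>\<Theta>. wt_link fm L)
   \<and> (\<forall>L\<in>\<Theta>. \<forall>L'\<in>\<Theta>. L \<noteq> L' \<longrightarrow> concl L \<inter> concl L' = {})
   \<and> (\<forall>L\<in>\<Theta>. \<forall>L'\<in>\<Theta>. L \<noteq> L' \<longrightarrow> prems L \<inter> prems L' = {})
   \<and> (\<forall>L\<in>\<Theta>. concl L \<inter> prems L = {})
   \<and> (\<forall>L\<in>\<Theta>. \<forall>x\<in>prems L. \<exists>L'\<in>\<Theta>. L' \<noteq> L \<and> x \<in> concl L')"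

inductive proof_net :: "('o \<Rightarrow> form) \<Rightarrow> 'o link set \<Rightarrow> bool" for fm where
  pn_ax: "fm a = PA \<Longrightarrow> fm b = NA \<Longrightarrow> proof_net fm {Ax a b}"
| pn_tens: "proof_net fm \<Theta>1 \<Longrightarrow> proof_net fm \<Theta>2 \<Longrightarrow> occs \<Theta>1 \<inter> occs \<Theta>2 = {} \<Longrightarrow>
    F \<in> concls \<Theta>1 \<Longrightarrow> G \<in> concls \<Theta>2 \<Longrightarrow> c \<notin> occs \<Theta>1 \<union> occs \<Theta>2 \<Longrightarrow>
    fm c = Tens (fm F) (fm G) \<Longrightarrow> proof_net fm (insert (TensL F G c) (\<Theta>1 \<union> \<Theta>2))"
| pn_par: "proof_net fm \<Theta> \<Longrightarrow> F \<in> concls \<Theta> \<Longrightarrow> G \<in> concls \<Theta> \<Longrightarrow> F \<noteq> G \<Longrightarrow>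
    c \<notin> occs \<Theta> \<Longrightarrow> fm c = Par (fm F) (fm G) \<Longrightarrow> proof_net fm (insert (ParL F G c) \<Theta>)"

definition dr_edges :: "'o link set \<Rightarrow> 'o set set" where
  "dr_edges \<Theta> =
     {{a, b} |a b. Ax a b \<in> \<Theta>}
   \<union> {{a, c} |a b c. TensL a b c \<in> \<Theta>} \<union> {{b, c} |a b c. TensL a b c \<in> \<Theta>}
   \<union> {{a, c} |a b c. ParL a b c \<in> \<Theta>}"

definition is_tree :: "'v set \<Rightarrow> 'v set set \<Rightarrow> bool" where
  "is_tree V E \<longleftrightarrow>
     finite V \<and> V \<noteq> {}
   \<and> E \<subseteq> {{x, y} |x y. x \<in> V \<and> y \<in> V \<and> x \<noteq> y}
   \<and> (\<forall>x\<in>V. \<forall>y\<in>V. (x, y) \<in> {(u, v). {u, v} \<in> E}\<^sup>*)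
   \<and> \<not> (\<exists>vs. 3 \<le> length vs \<and> distinct vs
            \<and> (\<forall>i. Suc i < length vs \<longrightarrow> {vs ! i, vs ! Suc i} \<in> E)
            \<and> {last vs, hd vs} \<in> E)"

(* label symbols: Lsym L = l_L, Rsym L = r_L *)
datatype 'o sym = Lsym "'o link" | Rsym "'o link"

(* labeled nodes: LN L is the labeled node of an ID- or tensor-link L;
   XN L is the extra labeled node in the piece of a par-link L (its cases 1 and 2).
   The par-node n_L of a par-link L is identified with L itself. *)
datatype 'o node = LN "'o link" | XN "'o link"

(* In all trees arising
   from T(Theta) every edge joins a labeled node to a labeled node (le), or a
   labeled node to a port of a par-node: up = attached to the port above,
   dn = attached to the port below. *)
record 'o dstate =
  lnodes :: "'o node set"
  pnodes :: "'o link set"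
  lab :: "'o node \<Rightarrow> 'o sym set"
  up :: "('o node \<times> 'o link) set"
  dn :: "('o node \<times> 'o link) set"
  le :: "'o node set set"
  act :: "'o node"

definition leftp :: "'o link set \<Rightarrow> 'o \<Rightarrow> 'o link \<Rightarrow> bool" where
  "leftp \<Theta> x C \<longleftrightarrow> C \<in> \<Theta> \<and> (\<exists>b c. C = ParL x b c)"

definition rightp :: "'o link set \<Rightarrow> 'o \<Rightarrow> 'o link \<Rightarrow> bool" where
  "rightp \<Theta> x C \<longleftrightarrow> C \<in> \<Theta> \<and> (\<exists>a c. C = ParL a x c)"

definition parprem :: "'o link set \<Rightarrow> 'o \<Rightarrow> bool" where
  "parprem \<Theta> x \<longleftrightarrow> (\<exists>C. leftp \<Theta> x C \<or> rightp \<Theta> x C)"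

(* ID-link case 1 condition for conclusion F *)
definition id_case1 :: "'o link set \<Rightarrow> 'o \<Rightarrow> bool" where
  "id_case1 \<Theta> F \<longleftrightarrow> (\<exists>C. rightp \<Theta> F C) \<or> F \<in> concls \<Theta>"

(* the ID-link with conclusions a, b makes T undefined *)
definition id_bad :: "'o link set \<Rightarrow> 'o \<Rightarrow> 'o \<Rightarrow> bool" where
  "id_bad \<Theta> a b \<longleftrightarrow>
     (id_case1 \<Theta> a \<and> parprem \<Theta> b) \<or> (id_case1 \<Theta> b \<and> parprem \<Theta> a)
   \<or> (\<not> id_case1 \<Theta> a \<and> \<not> id_case1 \<Theta> b \<and> parprem \<Theta> a \<and> parprem \<Theta> b)"

definition T_defined :: "'o link set \<Rightarrow> bool" where
  "T_defined \<Theta> \<longleftrightarrow> is_tree (occs \<Theta>) (dr_edges \<Theta>)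
     \<and> ((\<exists>a b. \<Theta> = {Ax a b}) \<or> (\<forall>a b. Ax a b \<in> \<Theta> \<longrightarrow> \<not> id_bad \<Theta> a b))"

definition lnodesT :: "'o link set \<Rightarrow> 'o node set" where
  "lnodesT \<Theta> = {LN L |L. L \<in> \<Theta> \<and> \<not> is_par L}
              \<union> {XN L |L. L \<in> \<Theta> \<and> is_par L \<and> (\<exists>x\<in>concl L. parprem \<Theta> x)}"

definition symsT :: "'o link set \<Rightarrow> 'o link \<Rightarrow> 'o sym set" where
  "symsT \<Theta> L = {Lsym C |C. \<exists>x\<in>concl L. leftp \<Theta> x C} \<union> {Rsym C |C. \<exists>x\<in>concl L. rightp \<Theta> x C}"

fun labT :: "'o link set \<Rightarrow> 'o node \<Rightarrow> 'o sym set" where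
  "labT \<Theta> (LN L) = symsT \<Theta> L"
| "labT \<Theta> (XN L) = symsT \<Theta> L"

definition leT :: "'o link set \<Rightarrow> 'o node set set" where
  "leT \<Theta> = {{LN P, LN C} |P C. P \<in> \<Theta> \<and> C \<in> \<Theta> \<and> \<not> is_par P \<and> is_tens C \<and> concl P \<inter> prems C \<noteq> {}}"

definition upT :: "'o link set \<Rightarrow> ('o node \<times> 'o link) set" where
  "upT \<Theta> = {(LN P, C) |P C. P \<in> \<Theta> \<and> \<not> is_par P \<and> (\<exists>x\<in>concl P. leftp \<Theta> x C)}
          \<union> {(XN P, C) |P C. P \<in> \<Theta> \<and> is_par P \<and> (\<exists>x\<in>concl P. leftp \<Theta> x C)}"

definition dnT :: "'o link set \<Rightarrow> ('o node \<times> 'o link) set" where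
  "dnT \<Theta> = {(LN C, P) |P C. P \<in> \<Theta> \<and> C \<in> \<Theta> \<and> is_par P \<and> is_tens C \<and> concl P \<inter> prems C \<noteq> {}}
          \<union> {(XN P, P) |P. P \<in> \<Theta> \<and> is_par P \<and> (\<exists>x\<in>concl P. parprem \<Theta> x)}"

definition T_init :: "'o link set \<Rightarrow> 'o node \<Rightarrow> 'o dstate" where
  "T_init \<Theta> n0 = \<lparr>lnodes = lnodesT \<Theta>, pnodes = {L \<in> \<Theta>. is_par L}, lab = labT \<Theta>,
                    up = upT \<Theta>, dn = dnT \<Theta>, le = leT \<Theta>, act = n0\<rparr>"

definition ren :: "'o node \<Rightarrow> 'o node \<Rightarrow> 'o node \<Rightarrow> 'o node" where
  "ren m n x = (if x = m then n else x)"

definition merge :: "'o dstate \<Rightarrow> 'o node \<Rightarrow> 'o node \<Rightarrow> 'o dstate" where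
  "merge s n m = s\<lparr>lnodes := lnodes s - {m},
                   lab := (lab s)(m := {}, n := lab s n \<union> lab s m),
                   up := {(ren m n x, L) |x L. (x, L) \<in> up s},
                   dn := {(ren m n x, L) |x L. (x, L) \<in> dn s},
                   le := (\<lambda>e. ren m n ` e) ` (le s - {{n, m}})\<rparr>"

definition pelim :: "'o dstate \<Rightarrow> 'o node \<Rightarrow> 'o link \<Rightarrow> 'o dstate" where
  "pelim s n L = s\<lparr>pnodes := pnodes s - {L},
                   up := {p \<in> up s. snd p \<noteq> L},
                   dn := {p \<in> dn s. snd p \<noteq> L},
                   le := le s \<union> {{n, m} |m. (m, L) \<in> dn s}\<rparr>"

inductive astep :: "'o dstate \<Rightarrow> 'o link option \<Rightarrow> 'o dstate \<Rightarrow> bool" where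
  par_elim: "act s = n \<Longrightarrow> n \<in> lnodes s \<Longrightarrow> L \<in> pnodes s \<Longrightarrow> (n, L) \<in> up s \<Longrightarrow>
    Lsym L \<in> lab s n \<Longrightarrow> Rsym L \<in> lab s n \<Longrightarrow> astep s None (pelim s n L)"
| union: "act s = n \<Longrightarrow> n \<in> lnodes s \<Longrightarrow> m \<in> lnodes s \<Longrightarrow> m \<noteq> n \<Longrightarrow> {n, m} \<in> le s \<Longrightarrow>
    astep s None (merge s n m)"
| local_jump: "act s = n \<Longrightarrow> n \<in> lnodes s \<Longrightarrow> L \<in> pnodes s \<Longrightarrow> (n, L) \<in> dn s \<Longrightarrow>
    m \<in> lnodes s \<Longrightarrow> Rsym L \<in> lab s m \<Longrightarrow> astep s (Some L) (s\<lparr>act := m\<rparr>)"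

(* runs s J t: t is reached from s by rewriting steps in which the local jumps
   are applied to pairwise distinct par-nodes, J being the set of those *)
inductive runs :: "'o dstate \<Rightarrow> 'o link set \<Rightarrow> 'o dstate \<Rightarrow> bool" where
  runs_refl: "runs s {} s"
| runs_other: "astep s None s' \<Longrightarrow> runs s' J t \<Longrightarrow> runs s J t"
| runs_jump: "astep s (Some L) s' \<Longrightarrow> runs s' J t \<Longrightarrow> L \<notin> J \<Longrightarrow> runs s (insert L J) t"

definition irreducible :: "'o dstate \<Rightarrow> bool" where
  "irreducible s \<longleftrightarrow> \<not> (\<exists>k s'. astep s k s')"

definition S_full :: "'o link set \<Rightarrow> 'o sym set" where
  "S_full \<Theta> = {Lsym L |L. L \<in> \<Theta> \<and> is_par L} \<union> {Rsym L |L. L \<in> \<Theta> \<and> is_par L}"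

definition accepting :: "'o link set \<Rightarrow> 'o dstate \<Rightarrow> bool" where
  "accepting \<Theta> s \<longleftrightarrow> (\<exists>n. lnodes s = {n} \<and> pnodes s = {} \<and> le s = {} \<and> up s = {} \<and> dn s = {}
                             \<and> lab s n = S_full \<Theta>)"

definition algA_no_at_step5 :: "'o link set \<Rightarrow> bool" where
  "algA_no_at_step5 \<Theta> \<longleftrightarrow> T_defined \<Theta> \<and>
     (\<exists>n0 J t. n0 \<in> lnodesT \<Theta> \<and> runs (T_init \<Theta> n0) J t \<and> irreducible t \<and> \<not> accepting \<Theta> t)"

end

theory Submission
  imports Defs "HOL-Library.Transitive_Closure_Table"
begin


definition occ :: "'o link \<Rightarrow> 'o set" where "occ X = concl X \<union> prems X"

definition iso :: "'o link set \<Rightarrow> 'o link set \<Rightarrow> bool" where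
 "iso \<Theta> R \<longleftrightarrow> (\<forall>X\<in>R. \<forall>Y\<in>\<Theta>-R. \<forall>x. x \<in> occ X \<longrightarrow> x \<in> occ Y \<longrightarrow>
     (\<exists>a b c. Y = ParL a b c \<and> (x = a \<or> x = b) \<and> \<not>(a \<in> occs R \<and> b \<in> occs R)))"

lemma isoD:
  assumes "iso \<Theta> R" "X \<in> R" "Y \<in> \<Theta>" "Y \<notin> R" "x \<in> occ X" "x \<in> occ Y"
  shows "\<exists>a b c. Y = ParL a b c \<and> (x = a \<or> x = b) \<and> \<not>(a \<in> occs R \<and> b \<in> occs R)"
  using assms unfolding iso_def by blast

lemma iso_sub:
  assumes "iso \<Theta> R" "\<Theta>1 \<subseteq> \<Theta>"
  shows "iso \<Theta>1 (R \<inter> \<Theta>1)"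
  unfolding iso_def
proof (intro ballI allI impI)
  fix X Y x assume h: "X \<in> R \<inter> \<Theta>1" "Y \<in> \<Theta>1 - R \<inter> \<Theta>1" "x \<in> occ X" "x \<in> occ Y"
  have mono: "occs (R \<inter> \<Theta>1) \<subseteq> occs R" unfolding occs_def by auto
  obtain a b c where "Y = ParL a b c" "x = a \<or> x = b" "\<not>(a \<in> occs R \<and> b \<in> occs R)"
    using isoD[OF assms(1), of X Y x] h assms(2) by blast
  then show "\<exists>a b c. Y = ParL a b c \<and> (x = a \<or> x = b) \<and> \<not> (a \<in> occs (R \<inter> \<Theta>1) \<and> b \<in> occs (R \<inter> \<Theta>1))"
    using mono by blast
qed

lemma concls_prod:
  assumes "F \<in> concls \<Theta>"
  shows "\<exists>Y\<in>\<Theta>. F \<in> occ Y" "\<forall>Y\<in>\<Theta>. F \<notin> prems Y"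
  using assms unfolding concls_def occs_def occ_def by blast+

lemma pn_iso:
  assumes "proof_net fm \<Theta>" "R \<subseteq> \<Theta>" "iso \<Theta> R"
  shows "R = {} \<or> R = \<Theta>"
  using assms
proof (induction arbitrary: R rule: proof_net.induct)
  case (pn_ax a b)
  then show ?case by auto
next
  case (pn_tens \<Theta>1 \<Theta>2 F G c)
  let ?T = "TensL F G c"
  have i1: "iso \<Theta>1 (R \<inter> \<Theta>1)" by (rule iso_sub[OF pn_tens.prems(2)]) auto
  have i2: "iso \<Theta>2 (R \<inter> \<Theta>2)" by (rule iso_sub[OF pn_tens.prems(2)]) auto
  have R1: "R \<inter> \<Theta>1 = {} \<or> R \<inter> \<Theta>1 = \<Theta>1" using pn_tens.IH(1)[OF _ i1] by auto
  have R2: "R \<inter> \<Theta>2 = {} \<or> R \<inter> \<Theta>2 = \<Theta>2" using pn_tens.IH(2)[OF _ i2] by auto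
  obtain Y1 where Y1: "Y1 \<in> \<Theta>1" "F \<in> occ Y1" using concls_prod(1)[OF pn_tens.hyps(4)] by blast
  obtain Y2 where Y2: "Y2 \<in> \<Theta>2" "G \<in> occ Y2" using concls_prod(1)[OF pn_tens.hyps(5)] by blast
  have np1: "F \<notin> prems Y1" using concls_prod(2)[OF pn_tens.hyps(4)] Y1 by blast
  have np2: "G \<notin> prems Y2" using concls_prod(2)[OF pn_tens.hyps(5)] Y2 by blast
  have FT: "F \<in> occ ?T" "G \<in> occ ?T" by (auto simp: occ_def)
  show ?case
  proof (cases "?T \<in> R")
    case True
    have "Y1 \<in> R"
    proof (rule ccontr)
      assume "Y1 \<notin> R"
      then obtain a b c' where "Y1 = ParL a b c'" "F = a \<or> F = b"
        using isoD[OF pn_tens.prems(2) True _ _ FT(1) Y1(2)] Y1 \<open>Y1 \<notin> R\<close> by blast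
      then show False using np1 by auto
    qed
    moreover have "Y2 \<in> R"
    proof (rule ccontr)
      assume "Y2 \<notin> R"
      then obtain a b c' where "Y2 = ParL a b c'" "G = a \<or> G = b"
        using isoD[OF pn_tens.prems(2) True _ _ FT(2) Y2(2)] Y2 \<open>Y2 \<notin> R\<close> by blast
      then show False using np2 by auto
    qed
    ultimately have "R \<inter> \<Theta>1 = \<Theta>1" "R \<inter> \<Theta>2 = \<Theta>2" using R1 R2 Y1 Y2 by auto
    then show ?thesis using True pn_tens.prems(1) by auto
  next
    case False
    have "R \<inter> \<Theta>1 = {}"
    proof (rule ccontr)
      assume "R \<inter> \<Theta>1 \<noteq> {}"
      then have "Y1 \<in> R" using R1 Y1 by auto
      then show False using isoD[OF pn_tens.prems(2) _ _ False _ FT(1)] Y1 by (metis UnCI insertCI link.distinct(5))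
    qed
    moreover have "R \<inter> \<Theta>2 = {}"
    proof (rule ccontr)
      assume "R \<inter> \<Theta>2 \<noteq> {}"
      then have "Y2 \<in> R" using R2 Y2 by auto
      then show False using isoD[OF pn_tens.prems(2) _ _ False _ FT(2)] Y2 by (metis UnCI insertCI link.distinct(5))
    qed
    ultimately show ?thesis using False pn_tens.prems(1) by auto
  qed
next
  case (pn_par \<Theta> F G c)
  let ?P = "ParL F G c"
  have i1: "iso \<Theta> (R \<inter> \<Theta>)" by (rule iso_sub[OF pn_par.prems(2)]) auto
  have R1: "R \<inter> \<Theta> = {} \<or> R \<inter> \<Theta> = \<Theta>" using pn_par.IH[OF _ i1] by auto
  obtain Y1 where Y1: "Y1 \<in> \<Theta>" "F \<in> occ Y1" using concls_prod(1)[OF pn_par.hyps(2)] by blast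
  obtain Y2 where Y2: "Y2 \<in> \<Theta>" "G \<in> occ Y2" using concls_prod(1)[OF pn_par.hyps(3)] by blast
  have np1: "F \<notin> prems Y1" using concls_prod(2)[OF pn_par.hyps(2)] Y1 by blast
  have FT: "F \<in> occ ?P" "G \<in> occ ?P" by (auto simp: occ_def)
  show ?case
  proof (cases "R \<inter> \<Theta> = {}")
    case True
    show ?thesis
    proof (cases "?P \<in> R")
      case True2: True
      have "Y1 \<notin> R" using Y1 True by auto
      then obtain a b c' where "Y1 = ParL a b c'" "F = a \<or> F = b"
        using isoD[OF pn_par.prems(2) True2 _ _ FT(1) Y1(2)] Y1 \<open>Y1 \<notin> R\<close> by blast
      then show ?thesis using np1 by auto
    next
      case False
      then show ?thesis using True pn_par.prems(1) by auto
    qed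
  next
    case False
    then have RT: "R \<inter> \<Theta> = \<Theta>" using R1 by auto
    show ?thesis
    proof (cases "?P \<in> R")
      case True
      then show ?thesis using RT pn_par.prems(1) by auto
    next
      case False
      have "Y1 \<in> R" "Y2 \<in> R" using RT Y1 Y2 by auto
      then have occ: "F \<in> occs R" "G \<in> occs R" using Y1 Y2 unfolding occs_def occ_def by auto
      obtain a b c' where "?P = ParL a b c'" "\<not>(a \<in> occs R \<and> b \<in> occs R)"
        using isoD[OF pn_par.prems(2) \<open>Y1 \<in> R\<close> _ False Y1(2) FT(1)] by blast
      then show ?thesis using occ by auto
    qed
  qed
qed


lemma tree_nobypass:
  assumes "is_tree V E" "{a,c} \<in> E" "a \<noteq> c"
    "(a,c) \<in> {(u,v). {u,v} \<in> E \<and> {u,v} \<noteq> {a,c}}\<^sup>*"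
  shows False
proof -
  let ?r = "\<lambda>u v. {u,v} \<in> E \<and> {u,v} \<noteq> {a,c}"
  have "?r\<^sup>*\<^sup>* a c" using assms(4) unfolding rtrancl_def by simp
  then obtain xs where "rtrancl_path ?r a xs c" by (auto simp: rtranclp_eq_rtrancl_path)
  then obtain ys where p: "rtrancl_path ?r a ys c" "distinct (a # ys)" by (rule rtrancl_path_distinct)
  have ne: "ys \<noteq> []" using p(1) assms(3) by (cases, auto)
  have lst: "last ys = c" using rtrancl_path_last[OF p(1) ne] .
  have cons: "\<forall>i. Suc i < length (a#ys) \<longrightarrow> {(a#ys) ! i, (a#ys) ! Suc i} \<in> E"
  proof (intro allI impI)
    fix i assume "Suc i < length (a#ys)"
    then have "i < length ys" by simp
    from rtrancl_path_nth[OF p(1) this] show "{(a#ys) ! i, (a#ys) ! Suc i} \<in> E" by simp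
  qed
  have len: "3 \<le> length (a#ys)"
  proof (rule ccontr)
    assume "\<not> 3 \<le> length (a#ys)"
    then have "length ys = 1" using ne by (cases ys) (auto simp: Suc_le_eq)
    then obtain y where "ys = [y]" by (cases ys) auto
    then have "ys = [c]" using lst by simp
    then have "?r a c" using rtrancl_path_nth[OF p(1), of 0] by simp
    then show False by simp
  qed
  have "{last (a#ys), hd (a#ys)} \<in> E" using lst ne assms(2) by (simp add: insert_commute)
  then show False using assms(1) len p(2) cons unfolding is_tree_def by blast
qed



definition occR :: "'o link set \<Rightarrow> 'o set" where "occR R = \<Union>(concl ` R)"

fun ledges :: "'o link \<Rightarrow> ('o \<times> 'o) set" where
  "ledges (Ax a b) = {(a,b),(b,a)}"
| "ledges (TensL a b c) = {(a,c),(c,a),(b,c),(c,b)}"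
| "ledges (ParL a b c) = {(a,c),(c,a)}"

definition conn :: "'o link set \<Rightarrow> 'o link set \<Rightarrow> ('o \<times> 'o) set" where
  "conn \<Theta> P = \<Union>(ledges ` (\<Theta> - P))"

lemma occ_iff: "x \<in> occ X \<longleftrightarrow> x \<in> concl X \<or> x \<in> prems X" by (simp add: occ_def)

locale PS =
  fixes fm :: "'o \<Rightarrow> form" and \<Theta> :: "'o link set"
  assumes ps: "proof_structure fm \<Theta>"
begin

lemma fin: "finite \<Theta>" using ps unfolding proof_structure_def by blast
lemma wt: "L \<in> \<Theta> \<Longrightarrow> wt_link fm L" using ps unfolding proof_structure_def by blast

lemma concl_uniq: "L \<in> \<Theta> \<Longrightarrow> L' \<in> \<Theta> \<Longrightarrow> x \<in> concl L \<Longrightarrow> x \<in> concl L' \<Longrightarrow> L = L'"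
  using ps unfolding proof_structure_def by blast
lemma prems_uniq: "L \<in> \<Theta> \<Longrightarrow> L' \<in> \<Theta> \<Longrightarrow> x \<in> prems L \<Longrightarrow> x \<in> prems L' \<Longrightarrow> L = L'"
  using ps unfolding proof_structure_def by blast
lemma cp: "L \<in> \<Theta> \<Longrightarrow> x \<in> concl L \<Longrightarrow> x \<in> prems L \<Longrightarrow> False"
  using ps unfolding proof_structure_def by blast
lemma prod: "L \<in> \<Theta> \<Longrightarrow> x \<in> prems L \<Longrightarrow> \<exists>L'\<in>\<Theta>. L' \<noteq> L \<and> x \<in> concl L'"
  using ps unfolding proof_structure_def by blast

lemma size_fm:
  assumes "L \<in> \<Theta>" "x \<in> prems L" "y \<in> concl L"
  shows "size (fm x) < size (fm y)"
  using wt[OF assms(1)] assms(2,3) by (cases L) auto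

lemma no2cycle:
  assumes "L \<in> \<Theta>" "L' \<in> \<Theta>" "x \<in> prems L" "y \<in> concl L" "y \<in> prems L'" "x \<in> concl L'"
  shows False
  using size_fm[OF assms(1,3,4)] size_fm[OF assms(2,5,6)] by simp

lemma pending_not_conn:
  assumes tree: "is_tree (occs \<Theta>) (dr_edges \<Theta>)"
    and P: "P \<subseteq> \<Theta>" "ParL a b c \<in> P"
    and path: "(a,c) \<in> (conn \<Theta> P)\<^sup>*"
  shows False
proof -
  let ?L = "ParL a b c"
  have L: "?L \<in> \<Theta>" using P by auto
  have ac: "a \<noteq> c" using wt[OF L] by simp
  have E: "{a,c} \<in> dr_edges \<Theta>" using L unfolding dr_edges_def by auto
  have sub: "conn \<Theta> P \<subseteq> {(u,v). {u,v} \<in> dr_edges \<Theta> \<and> {u,v} \<noteq> {a,c}}"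
  proof
    fix p assume "p \<in> conn \<Theta> P"
    then obtain K where K0: "K \<in> \<Theta>" "K \<notin> P" "p \<in> ledges K"
      unfolding conn_def by blast
    obtain u v where uv: "p = (u,v)" by (cases p)
    have K: "K \<in> \<Theta>" "K \<notin> P" "(u,v) \<in> ledges K" "p = (u,v)" using K0 uv by auto
    have KL: "K \<noteq> ?L" using K P by auto
    show "p \<in> {(u,v). {u,v} \<in> dr_edges \<Theta> \<and> {u,v} \<noteq> {a,c}}"
    proof (cases K)
      case (Ax a' b')
      have e: "{u,v} = {a',b'}" using K Ax by (auto simp: doubleton_eq_iff)
      have "{u,v} \<in> dr_edges \<Theta>" using e K Ax unfolding dr_edges_def by auto
      moreover have "{u,v} \<noteq> {a,c}"
      proof
        assume "{u,v} = {a,c}"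
        then have "c \<in> concl K" using e Ax by auto
        then show False using concl_uniq[OF K(1) L] KL by simp
      qed
      ultimately show ?thesis using K by simp
    next
      case (TensL p' q' r')
      have e: "{u,v} = {p',r'} \<or> {u,v} = {q',r'}" using K TensL by (auto simp: doubleton_eq_iff)
      have "{u,v} \<in> dr_edges \<Theta>" using e K TensL unfolding dr_edges_def by auto
      moreover have "{u,v} \<noteq> {a,c}"
      proof
        assume h: "{u,v} = {a,c}"
        show False
        proof (cases "a \<in> prems K")
          case True
          then show False using prems_uniq[OF K(1) L, of a] KL by simp
        next
          case False
          then have "c \<in> prems K" "a \<in> concl K" using h e TensL False by (auto simp: doubleton_eq_iff)
          then show False using no2cycle[OF L K(1), of a c] by simp
        qed
      qed
      ultimately show ?thesis using K by simp
    next
      case (ParL p' q' r')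
      have e: "{u,v} = {p',r'}" using K ParL by (auto simp: doubleton_eq_iff)
      have "{u,v} \<in> dr_edges \<Theta>" using e K ParL unfolding dr_edges_def by auto
      moreover have "{u,v} \<noteq> {a,c}"
      proof
        assume h: "{u,v} = {a,c}"
        show False
        proof (cases "a \<in> prems K")
          case True
          then show False using prems_uniq[OF K(1) L, of a] KL by simp
        next
          case False
          then have "c \<in> prems K" "a \<in> concl K" using h e ParL False by (auto simp: doubleton_eq_iff)
          then show False using no2cycle[OF L K(1), of a c] by simp
        qed
      qed
      ultimately show ?thesis using K by simp
    qed
  qed
  have "(a,c) \<in> {(u,v). {u,v} \<in> dr_edges \<Theta> \<and> {u,v} \<noteq> {a,c}}\<^sup>*"
    using rtrancl_mono[OF sub] path by (rule subsetD)
  then show False using tree_nobypass[OF tree E ac] by simp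
qed

end


definition CROSS :: "'o dstate \<Rightarrow> ('o node \<Rightarrow> 'o link set) \<Rightarrow> 'o node \<Rightarrow> 'o link \<Rightarrow> 'o link \<Rightarrow> 'o \<Rightarrow> bool" where
  "CROSS s reg m X Y x \<longleftrightarrow> (\<exists>m'\<in>lnodes s. Y \<in> reg m' \<and> {m,m'} \<in> le s)
     \<or> (Y \<in> pnodes s \<and> x \<in> prems Y \<and> (\<forall>b c. Y = ParL x b c \<longrightarrow> (m,Y) \<in> up s))
     \<or> (X \<in> pnodes s \<and> x \<in> prems X)"

definition "inv_act s \<longleftrightarrow> act s \<in> lnodes s"
definition "inv_reg \<Theta> s reg \<longleftrightarrow> (\<forall>m\<in>lnodes s. reg m \<noteq> {} \<and> reg m \<subseteq> \<Theta>)"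
definition "inv_disj s reg \<longleftrightarrow> (\<forall>m\<in>lnodes s. \<forall>m'\<in>lnodes s. m \<noteq> m' \<longrightarrow> reg m \<inter> reg m' = {})"
definition "inv_own \<Theta> s reg \<longleftrightarrow> (\<forall>X\<in>\<Theta>. (\<exists>m\<in>lnodes s. X \<in> reg m) \<or> (X \<in> pnodes s \<and> concl X \<subseteq> concls \<Theta>))"
definition "inv_pn \<Theta> s \<longleftrightarrow> pnodes s \<subseteq> {X\<in>\<Theta>. is_par X}"
definition "inv_up s \<longleftrightarrow> (\<forall>m L. (m,L) \<in> up s \<longrightarrow> m \<in> lnodes s \<and> L \<in> pnodes s)"
definition "inv_dn s reg \<longleftrightarrow> (\<forall>m L. (m,L) \<in> dn s \<longrightarrow> m \<in> lnodes s \<and> L \<in> pnodes s \<and> L \<in> reg m)"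
definition "inv_le \<Theta> s reg \<longleftrightarrow> (\<forall>e\<in>le s. \<exists>p q. e = {p,q} \<and> p \<noteq> q \<and> p \<in> lnodes s \<and> q \<in> lnodes s \<and>
        (\<exists>x\<in>occR (reg p). \<exists>y\<in>occR (reg q). (x,y) \<in> (conn \<Theta> (pnodes s))\<^sup>*))"
definition "inv_lab \<Theta> s reg \<longleftrightarrow> (\<forall>m\<in>lnodes s. lab s m = \<Union>(symsT \<Theta> ` reg m))"
definition "inv_gate s reg \<longleftrightarrow> (\<forall>P\<in>pnodes s. \<forall>m\<in>lnodes s. P \<in> reg m \<longrightarrow> (m,P) \<in> dn s)"
definition "inv_cross \<Theta> s reg \<longleftrightarrow> (\<forall>m\<in>lnodes s. \<forall>X\<in>reg m. \<forall>Y\<in>\<Theta>. \<forall>x. Y \<notin> reg m \<longrightarrow> x \<in> occ X \<longrightarrow> x \<in> occ Y \<longrightarrow> CROSS s reg m X Y x)"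
definition "inv_conn \<Theta> s reg \<longleftrightarrow> (\<forall>m\<in>lnodes s. \<forall>x\<in>occR (reg m). \<forall>y\<in>occR (reg m). (x,y) \<in> (conn \<Theta> (pnodes s))\<^sup>*)"

definition INV :: "'o link set \<Rightarrow> 'o dstate \<Rightarrow> ('o node \<Rightarrow> 'o link set) \<Rightarrow> bool" where
  "INV \<Theta> s reg \<longleftrightarrow> inv_act s \<and> inv_reg \<Theta> s reg \<and> inv_disj s reg \<and> inv_own \<Theta> s reg \<and> inv_pn \<Theta> s
     \<and> inv_up s \<and> inv_dn s reg \<and> inv_le \<Theta> s reg \<and> inv_lab \<Theta> s reg \<and> inv_gate s reg
     \<and> inv_cross \<Theta> s reg \<and> inv_conn \<Theta> s reg"

lemma INVI:
  assumes "inv_act s" "inv_reg \<Theta> s reg" "inv_disj s reg" "inv_own \<Theta> s reg" "inv_pn \<Theta> s"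
     "inv_up s" "inv_dn s reg" "inv_le \<Theta> s reg" "inv_lab \<Theta> s reg" "inv_gate s reg"
     "inv_cross \<Theta> s reg" "inv_conn \<Theta> s reg"
  shows "INV \<Theta> s reg" using assms unfolding INV_def by blast

lemma INVE:
  assumes "INV \<Theta> s reg"
  shows "inv_act s" "inv_reg \<Theta> s reg" "inv_disj s reg" "inv_own \<Theta> s reg" "inv_pn \<Theta> s"
     "inv_up s" "inv_dn s reg" "inv_le \<Theta> s reg" "inv_lab \<Theta> s reg" "inv_gate s reg"
     "inv_cross \<Theta> s reg" "inv_conn \<Theta> s reg" using assms unfolding INV_def by blast+

lemma INVD:
  assumes "INV \<Theta> s reg"
  shows "act s \<in> lnodes s"
    "\<And>m. m\<in>lnodes s \<Longrightarrow> reg m \<noteq> {}"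
    "\<And>m. m\<in>lnodes s \<Longrightarrow> reg m \<subseteq> \<Theta>"
    "\<And>m m'. m\<in>lnodes s \<Longrightarrow> m'\<in>lnodes s \<Longrightarrow> m \<noteq> m' \<Longrightarrow> reg m \<inter> reg m' = {}"
    "\<And>X. X\<in>\<Theta> \<Longrightarrow> (\<exists>m\<in>lnodes s. X \<in> reg m) \<or> (X \<in> pnodes s \<and> concl X \<subseteq> concls \<Theta>)"
    "pnodes s \<subseteq> {X\<in>\<Theta>. is_par X}"
    "\<And>m L. (m,L) \<in> up s \<Longrightarrow> m \<in> lnodes s \<and> L \<in> pnodes s"
    "\<And>m L. (m,L) \<in> dn s \<Longrightarrow> m \<in> lnodes s \<and> L \<in> pnodes s \<and> L \<in> reg m"
    "\<And>e. e\<in>le s \<Longrightarrow> \<exists>p q. e = {p,q} \<and> p \<noteq> q \<and> p \<in> lnodes s \<and> q \<in> lnodes s \<and>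
        (\<exists>x\<in>occR (reg p). \<exists>y\<in>occR (reg q). (x,y) \<in> (conn \<Theta> (pnodes s))\<^sup>*)"
    "\<And>m. m\<in>lnodes s \<Longrightarrow> lab s m = \<Union>(symsT \<Theta> ` reg m)"
    "\<And>P m. P\<in>pnodes s \<Longrightarrow> m\<in>lnodes s \<Longrightarrow> P \<in> reg m \<Longrightarrow> (m,P) \<in> dn s"
    "\<And>m X Y x. m\<in>lnodes s \<Longrightarrow> X\<in>reg m \<Longrightarrow> Y\<in>\<Theta> \<Longrightarrow> Y \<notin> reg m \<Longrightarrow> x \<in> occ X \<Longrightarrow> x \<in> occ Y \<Longrightarrow> CROSS s reg m X Y x"
    "\<And>m x y. m\<in>lnodes s \<Longrightarrow> x\<in>occR (reg m) \<Longrightarrow> y\<in>occR (reg m) \<Longrightarrow> (x,y) \<in> (conn \<Theta> (pnodes s))\<^sup>*"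
proof -
  note E = INVE[OF assms]
  show "act s \<in> lnodes s" using E(1) unfolding inv_act_def .
  show "\<And>m. m\<in>lnodes s \<Longrightarrow> reg m \<noteq> {}" using E(2) unfolding inv_reg_def by blast
  show "\<And>m. m\<in>lnodes s \<Longrightarrow> reg m \<subseteq> \<Theta>" using E(2) unfolding inv_reg_def by blast
  show "\<And>m m'. m\<in>lnodes s \<Longrightarrow> m'\<in>lnodes s \<Longrightarrow> m \<noteq> m' \<Longrightarrow> reg m \<inter> reg m' = {}"
    using E(3) unfolding inv_disj_def by blast
  show "\<And>X. X\<in>\<Theta> \<Longrightarrow> (\<exists>m\<in>lnodes s. X \<in> reg m) \<or> (X \<in> pnodes s \<and> concl X \<subseteq> concls \<Theta>)"
    using E(4) unfolding inv_own_def by blast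
  show "pnodes s \<subseteq> {X\<in>\<Theta>. is_par X}" using E(5) unfolding inv_pn_def .
  show "\<And>m L. (m,L) \<in> up s \<Longrightarrow> m \<in> lnodes s \<and> L \<in> pnodes s" using E(6) unfolding inv_up_def by blast
  show "\<And>m L. (m,L) \<in> dn s \<Longrightarrow> m \<in> lnodes s \<and> L \<in> pnodes s \<and> L \<in> reg m" using E(7) unfolding inv_dn_def by blast
  show "\<And>e. e\<in>le s \<Longrightarrow> \<exists>p q. e = {p,q} \<and> p \<noteq> q \<and> p \<in> lnodes s \<and> q \<in> lnodes s \<and>
        (\<exists>x\<in>occR (reg p). \<exists>y\<in>occR (reg q). (x,y) \<in> (conn \<Theta> (pnodes s))\<^sup>*)"
    using E(8) unfolding inv_le_def by (rule bspec)
  show "\<And>m. m\<in>lnodes s \<Longrightarrow> lab s m = \<Union>(symsT \<Theta> ` reg m)" using E(9) unfolding inv_lab_def by blast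
  show "\<And>P m. P\<in>pnodes s \<Longrightarrow> m\<in>lnodes s \<Longrightarrow> P \<in> reg m \<Longrightarrow> (m,P) \<in> dn s" using E(10) unfolding inv_gate_def by blast
  show "\<And>m X Y x. m\<in>lnodes s \<Longrightarrow> X\<in>reg m \<Longrightarrow> Y\<in>\<Theta> \<Longrightarrow> Y \<notin> reg m \<Longrightarrow> x \<in> occ X \<Longrightarrow> x \<in> occ Y \<Longrightarrow> CROSS s reg m X Y x"
    using E(11) unfolding inv_cross_def by blast
  show "\<And>m x y. m\<in>lnodes s \<Longrightarrow> x\<in>occR (reg m) \<Longrightarrow> y\<in>occR (reg m) \<Longrightarrow> (x,y) \<in> (conn \<Theta> (pnodes s))\<^sup>*"
    using E(12) unfolding inv_conn_def by blast
qed

lemma symsT_L: "Lsym C \<in> symsT \<Theta> X \<longleftrightarrow> C \<in> \<Theta> \<and> (\<exists>a b c. C = ParL a b c \<and> a \<in> concl X)"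
  unfolding symsT_def leftp_def by auto
lemma symsT_R: "Rsym C \<in> symsT \<Theta> X \<longleftrightarrow> C \<in> \<Theta> \<and> (\<exists>a b c. C = ParL a b c \<and> b \<in> concl X)"
  unfolding symsT_def rightp_def by auto

context PS
begin

lemma stuck_accepting:
  assumes pn: "proof_net fm \<Theta>" and inv: "INV \<Theta> t reg" and irr: "irreducible t"
  shows "accepting \<Theta> t"
proof -
  note I = INVD[OF inv]
  define n where "n = act t"
  have n: "n \<in> lnodes t" using I(1) n_def by simp
  have nostep: "\<And>k s'. \<not> astep t k s'" using irr unfolding irreducible_def by blast
  have jump_ok: "(n,P) \<notin> dn t" if P: "P \<in> pnodes t" for P
  proof
    assume dnP: "(n,P) \<in> dn t"
    have "P \<in> \<Theta>" "is_par P" using P I(6) by auto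
    then obtain a b c where Pd: "P = ParL a b c" by (cases P) auto
    have bP: "b \<in> prems P" using Pd by simp
    obtain Z where Z: "Z \<in> \<Theta>" "b \<in> concl Z" using prod[OF \<open>P \<in> \<Theta>\<close> bP] by blast
    have "\<exists>m\<in>lnodes t. Z \<in> reg m"
    proof (rule ccontr)
      assume "\<not> (\<exists>m\<in>lnodes t. Z \<in> reg m)"
      then have "concl Z \<subseteq> concls \<Theta>" using I(5)[OF Z(1)] by blast
      then have "b \<in> concls \<Theta>" using Z by blast
      then show False using bP \<open>P \<in> \<Theta>\<close> unfolding concls_def by blast
    qed
    then obtain m where m: "m \<in> lnodes t" "Z \<in> reg m" by blast
    have "Rsym P \<in> symsT \<Theta> Z" using symsT_R \<open>P \<in> \<Theta>\<close> Pd Z(2) by blast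
    then have "Rsym P \<in> lab t m" using I(10)[OF m(1)] m(2) by blast
    then have "astep t (Some P) (t\<lparr>act := m\<rparr>)"
      using local_jump[OF n_def[symmetric] n P dnP m(1)] by blast
    then show False using nostep by blast
  qed
  have no_union: "{n,m} \<notin> le t" if "m \<in> lnodes t" "m \<noteq> n" for m
    using union[OF n_def[symmetric] n that(1) that(2)] nostep by blast
  have no_elim: "Rsym L \<notin> lab t n"
    if "L \<in> pnodes t" "(n,L) \<in> up t" "Lsym L \<in> lab t n" for L
    using par_elim[OF n_def[symmetric] n that(1) that(2) that(3)] nostep by blast
  define R where "R = reg n"
  have iso: "iso \<Theta> R"
    unfolding iso_def
  proof (intro ballI allI impI)
    fix X Y x assume X: "X \<in> R" and Y: "Y \<in> \<Theta> - R" and xX: "x \<in> occ X" and xY: "x \<in> occ Y"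
    have c: "CROSS t reg n X Y x" using I(12)[OF n X[unfolded R_def] _ _ xX xY] Y R_def by blast
    have c1: "\<not> (\<exists>m'\<in>lnodes t. Y \<in> reg m' \<and> {n,m'} \<in> le t)"
      using no_union Y R_def by blast
    have c3: "\<not> (X \<in> pnodes t \<and> x \<in> prems X)"
      using jump_ok I(11)[OF _ n] X R_def by blast
    have c2: "Y \<in> pnodes t" "x \<in> prems Y" "\<forall>b c. Y = ParL x b c \<longrightarrow> (n,Y) \<in> up t"
      using c c1 c3 unfolding CROSS_def by blast+
    have "Y \<in> \<Theta>" "is_par Y" using c2 I(6) by auto
    then obtain a b cc where Yd: "Y = ParL a b cc" by (cases Y) auto
    have xab: "x = a \<or> x = b" using c2(2) Yd by simp
    have "\<not> (a \<in> occs R \<and> b \<in> occs R)"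
    proof
      assume ab: "a \<in> occs R \<and> b \<in> occs R"
      have prodR: "\<exists>Z\<in>R. y \<in> concl Z" if yR: "y \<in> occs R" and yP: "y \<in> prems Y" for y
      proof -
        obtain Z where Z: "Z \<in> R" "y \<in> concl Z \<or> y \<in> prems Z" using yR unfolding occs_def by blast
        have "Z \<in> \<Theta>" using Z I(3)[OF n] R_def by blast
        have "Z \<noteq> Y" using Z Y by blast
        then have "y \<notin> prems Z" using prems_uniq[OF \<open>Z \<in> \<Theta>\<close> \<open>Y \<in> \<Theta>\<close> _ yP] by blast
        then show ?thesis using Z by blast
      qed
      obtain Za where Za: "Za \<in> R" "a \<in> concl Za" using prodR ab Yd by auto
      obtain Zb where Zb: "Zb \<in> R" "b \<in> concl Zb" using prodR ab Yd by auto
      have "Lsym Y \<in> symsT \<Theta> Za" using symsT_L \<open>Y \<in> \<Theta>\<close> Yd Za by blast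
      then have lY: "Lsym Y \<in> lab t n" using I(10)[OF n] Za R_def by blast
      have "Rsym Y \<in> symsT \<Theta> Zb" using symsT_R \<open>Y \<in> \<Theta>\<close> Yd Zb by blast
      then have rY: "Rsym Y \<in> lab t n" using I(10)[OF n] Zb R_def by blast
      have aocc: "a \<in> occ Za" "a \<in> occ Y" using Za Yd by (auto simp: occ_def)
      have cc: "CROSS t reg n Za Y a" using I(12)[OF n _ \<open>Y \<in> \<Theta>\<close> _ aocc] Za Y R_def by blast
      have "Za \<in> \<Theta>" using Za I(3)[OF n] R_def by blast
      have "\<not> (Za \<in> pnodes t \<and> a \<in> prems Za)"
        using prems_uniq[OF \<open>Za \<in> \<Theta>\<close> \<open>Y \<in> \<Theta>\<close>, of a] Yd Za Y by auto
      then have "(n,Y) \<in> up t" using cc no_union Y R_def Yd unfolding CROSS_def by blast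
      then show False using no_elim[OF c2(1) _ lY] rY by blast
    qed
    then show "\<exists>a b c. Y = ParL a b c \<and> (x = a \<or> x = b) \<and> \<not> (a \<in> occs R \<and> b \<in> occs R)"
      using Yd xab by blast
  qed
  have "R = {} \<or> R = \<Theta>" using pn_iso[OF pn _ iso] I(3)[OF n] R_def by blast
  then have RT: "reg n = \<Theta>" using I(2)[OF n] R_def by blast
  have ln: "lnodes t = {n}"
  proof (intro equalityI subsetI)
    fix m assume m: "m \<in> lnodes t"
    show "m \<in> {n}"
    proof (rule ccontr)
      assume "m \<notin> {n}"
      then have "reg m \<inter> reg n = {}" using I(4)[OF m n] by auto
      then show False using I(2)[OF m] I(3)[OF m] RT by blast
    qed
  qed (use n in auto)
  have pn0: "pnodes t = {}"
  proof (rule ccontr)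
    assume "pnodes t \<noteq> {}"
    then obtain P where P: "P \<in> pnodes t" by blast
    then have "P \<in> reg n" using I(6) RT by auto
    then show False using jump_ok[OF P] I(11)[OF P n] by blast
  qed
  have up0: "up t = {}" using I(7) pn0 by fast
  have dn0: "dn t = {}" using I(8) pn0 by fast
  have le0: "le t = {}"
  proof (rule ccontr)
    assume "le t \<noteq> {}"
    then obtain e where "e \<in> le t" by blast
    then show False using I(9) ln by fastforce
  qed
  have labn: "lab t n = S_full \<Theta>"
  proof -
    have "lab t n = \<Union>(symsT \<Theta> ` \<Theta>)" using I(10)[OF n] RT by simp
    also have "\<dots> = S_full \<Theta>"
    proof (intro equalityI subsetI)
      fix z assume "z \<in> \<Union>(symsT \<Theta> ` \<Theta>)"
      then obtain X where X: "X \<in> \<Theta>" "z \<in> symsT \<Theta> X" by blast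
      then show "z \<in> S_full \<Theta>" unfolding symsT_def leftp_def rightp_def S_full_def by auto
    next
      fix z assume "z \<in> S_full \<Theta>"
      then obtain L where L: "L \<in> \<Theta>" "is_par L" "z = Lsym L \<or> z = Rsym L" unfolding S_full_def by blast
      then obtain a b c where Ld: "L = ParL a b c" by (cases L) auto
      obtain Za where Za: "Za \<in> \<Theta>" "a \<in> concl Za" using prod[OF L(1), of a] Ld by auto
      obtain Zb where Zb: "Zb \<in> \<Theta>" "b \<in> concl Zb" using prod[OF L(1), of b] Ld by auto
      have "Lsym L \<in> symsT \<Theta> Za" using symsT_L L(1) Ld Za by blast
      moreover have "Rsym L \<in> symsT \<Theta> Zb" using symsT_R L(1) Ld Zb by blast
      ultimately show "z \<in> \<Union>(symsT \<Theta> ` \<Theta>)" using L(3) Za Zb by blast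
    qed
    finally show ?thesis .
  qed
  show ?thesis unfolding accepting_def using ln pn0 up0 dn0 le0 labn by blast
qed

end


lemma ledges_sym: "(u,v) \<in> ledges K \<Longrightarrow> (v,u) \<in> ledges K"
  by (cases K) auto

lemma conn_sym: "(x,y) \<in> (conn \<Theta> P)\<^sup>* \<Longrightarrow> (y,x) \<in> (conn \<Theta> P)\<^sup>*"
proof -
  have "sym (conn \<Theta> P)"
  proof (rule symI)
    fix a b assume "(a,b) \<in> conn \<Theta> P"
    then obtain K where K: "K \<in> \<Theta> - P" "(a,b) \<in> ledges K" unfolding conn_def by blast
    have "(b,a) \<in> ledges K" using K(2) by (rule ledges_sym)
    then show "(b,a) \<in> conn \<Theta> P" unfolding conn_def using K(1) by blast
  qed
  then have "sym ((conn \<Theta> P)\<^sup>*)" by (rule sym_rtrancl)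
  then show "(x,y) \<in> (conn \<Theta> P)\<^sup>* \<Longrightarrow> (y,x) \<in> (conn \<Theta> P)\<^sup>*" unfolding sym_def by blast
qed

lemma conn_mono: "P' \<subseteq> P \<Longrightarrow> (x,y) \<in> (conn \<Theta> P)\<^sup>* \<Longrightarrow> (x,y) \<in> (conn \<Theta> P')\<^sup>*"
proof -
  assume "P' \<subseteq> P" "(x,y) \<in> (conn \<Theta> P)\<^sup>*"
  moreover have "conn \<Theta> P \<subseteq> conn \<Theta> P'" using \<open>P' \<subseteq> P\<close> unfolding conn_def by blast
  ultimately show ?thesis using rtrancl_mono by blast
qed

lemma occR_Un: "occR (A \<union> B) = occR A \<union> occR B" unfolding occR_def by blast
lemma occR_mono: "A \<subseteq> B \<Longrightarrow> occR A \<subseteq> occR B" unfolding occR_def by blast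

lemma merge_simps:
  "lnodes (merge s n m) = lnodes s - {m}"
  "pnodes (merge s n m) = pnodes s"
  "act (merge s n m) = act s"
  "lab (merge s n m) = (lab s)(m := {}, n := lab s n \<union> lab s m)"
  "up (merge s n m) = {(ren m n x, L) |x L. (x, L) \<in> up s}"
  "dn (merge s n m) = {(ren m n x, L) |x L. (x, L) \<in> dn s}"
  "le (merge s n m) = (\<lambda>e. ren m n ` e) ` (le s - {{n, m}})"
  by (simp_all add: merge_def)

lemma ren_simps: "ren m n m = n" "x \<noteq> m \<Longrightarrow> ren m n x = x" by (simp_all add: ren_def)

context PS
begin

lemma inv_union:
  assumes inv: "INV \<Theta> s reg" and a: "act s = n" and n: "n \<in> lnodes s" and m: "m \<in> lnodes s"
    and mn: "m \<noteq> n" and e: "{n,m} \<in> le s"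
  shows "INV \<Theta> (merge s n m) (reg(n := reg n \<union> reg m))"
proof -
  note I = INVD[OF inv]
  let ?s = "merge s n m"
  let ?r = "reg(n := reg n \<union> reg m)"
  let ?ren = "ren m n"
  note ms = merge_simps[of s n m]
  have ln': "lnodes ?s = lnodes s - {m}" by (simp add: ms)
  have ren_ln: "?ren x \<in> lnodes ?s" if "x \<in> lnodes s" for x
    using that n mn by (cases "x = m") (auto simp: ms ren_def)
  have ren_reg: "reg x \<subseteq> ?r (?ren x)" for x
    by (cases "x = m"; cases "x = n") (auto simp: ren_def)
  have r_other: "?r k = reg k" if "k \<noteq> n" for k using that by simp
  have A: "inv_act ?s" unfolding inv_act_def using a n mn by (simp add: ms)
  have B: "inv_reg \<Theta> ?s ?r" unfolding inv_reg_def
  proof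
    fix k assume k: "k \<in> lnodes ?s"
    then have k0: "k \<in> lnodes s" "k \<noteq> m" by (auto simp: ms)
    show "?r k \<noteq> {} \<and> ?r k \<subseteq> \<Theta>"
      using I(2)[OF k0(1)] I(3)[OF k0(1)] I(3)[OF m] by (cases "k = n") auto
  qed
  have C: "inv_disj ?s ?r" unfolding inv_disj_def
  proof (intro ballI impI)
    fix k k' assume k: "k \<in> lnodes ?s" and k': "k' \<in> lnodes ?s" and kk: "k \<noteq> k'"
    then have k0: "k \<in> lnodes s" "k \<noteq> m" "k' \<in> lnodes s" "k' \<noteq> m" by (auto simp: ms)
    show "?r k \<inter> ?r k' = {}"
    proof (cases "k = n")
      case True
      then have "k' \<noteq> n" using kk by simp
      then show ?thesis using True I(4)[OF n k0(3)] I(4)[OF m k0(3)] k0 by auto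
    next
      case False
      show ?thesis
      proof (cases "k' = n")
        case True
        then show ?thesis using False I(4)[OF k0(1) n] I(4)[OF k0(1) m] k0 by auto
      next
        case False2: False
        then show ?thesis using False I(4)[OF k0(1) k0(3) kk] by simp
      qed
    qed
  qed
  have D: "inv_own \<Theta> ?s ?r" unfolding inv_own_def
  proof
    fix X assume X: "X \<in> \<Theta>"
    show "(\<exists>k\<in>lnodes ?s. X \<in> ?r k) \<or> (X \<in> pnodes ?s \<and> concl X \<subseteq> concls \<Theta>)"
    proof (cases "\<exists>k\<in>lnodes s. X \<in> reg k")
      case True
      then obtain k where k: "k \<in> lnodes s" "X \<in> reg k" by blast
      then have "X \<in> ?r (?ren k)" using ren_reg by blast
      then show ?thesis using ren_ln[OF k(1)] by blast
    next
      case False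
      then show ?thesis using I(5)[OF X] by (simp add: ms)
    qed
  qed
  have E: "inv_pn \<Theta> ?s" unfolding inv_pn_def using I(6) by (simp add: ms)
  have F: "inv_up ?s" unfolding inv_up_def
  proof (intro allI impI)
    fix y L assume "(y,L) \<in> up ?s"
    then obtain x where x: "y = ?ren x" "(x,L) \<in> up s" by (auto simp: ms)
    then show "y \<in> lnodes ?s \<and> L \<in> pnodes ?s" using I(7)[OF x(2)] ren_ln by (simp add: ms)
  qed
  have G: "inv_dn ?s ?r" unfolding inv_dn_def
  proof (intro allI impI)
    fix y L assume "(y,L) \<in> dn ?s"
    then obtain x where x: "y = ?ren x" "(x,L) \<in> dn s" by (auto simp: ms)
    have d: "x \<in> lnodes s" "L \<in> pnodes s" "L \<in> reg x" using I(8)[OF x(2)] by auto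
    have "y \<in> lnodes ?s" using ren_ln[OF d(1)] x(1) by simp
    moreover have "L \<in> ?r y" using subsetD[OF ren_reg[of x] d(3)] x(1) by simp
    moreover have "L \<in> pnodes ?s" using d(2) by (simp add: ms)
    ultimately show "y \<in> lnodes ?s \<and> L \<in> pnodes ?s \<and> L \<in> ?r y" by blast
  qed
  have H: "inv_le \<Theta> ?s ?r" unfolding inv_le_def
  proof
    fix e' assume "e' \<in> le ?s"
    then obtain e where e': "e' = ?ren ` e" "e \<in> le s" "e \<noteq> {n,m}" by (auto simp: ms)
    obtain p q x y where pq: "e = {p,q}" "p \<noteq> q" "p \<in> lnodes s" "q \<in> lnodes s"
      "x \<in> occR (reg p)" "y \<in> occR (reg q)" "(x,y) \<in> (conn \<Theta> (pnodes s))\<^sup>*"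
      using I(9)[OF e'(2)] by blast
    have img: "e' = {?ren p, ?ren q}" using e' pq by simp
    have neq: "?ren p \<noteq> ?ren q"
    proof (cases "p = m")
      case True
      then have "q \<noteq> n" using e'(3) pq by (auto simp: insert_commute)
      then show ?thesis using True pq(2) by (simp add: ren_def)
    next
      case False
      show ?thesis
      proof (cases "q = m")
        case True
        then have "p \<noteq> n" using e'(3) pq by auto
        then show ?thesis using True False by (simp add: ren_def)
      next
        case False2: False
        then show ?thesis using False pq(2) by (simp add: ren_def)
      qed
    qed
    have xin: "x \<in> occR (?r (?ren p))" using occR_mono[OF ren_reg] pq(5) by blast
    have yin: "y \<in> occR (?r (?ren q))" using occR_mono[OF ren_reg] pq(6) by blast
    have pn_eq: "pnodes ?s = pnodes s" by (simp add: ms)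
    show "\<exists>p q. e' = {p,q} \<and> p \<noteq> q \<and> p \<in> lnodes ?s \<and> q \<in> lnodes ?s \<and>
        (\<exists>x\<in>occR (?r p). \<exists>y\<in>occR (?r q). (x,y) \<in> (conn \<Theta> (pnodes ?s))\<^sup>*)"
    proof (rule exI[where x="ren m n p"], rule exI[where x="ren m n q"], intro conjI)
      show "e' = {?ren p, ?ren q}" by (rule img)
      show "?ren p \<noteq> ?ren q" by (rule neq)
      show "?ren p \<in> lnodes ?s" by (rule ren_ln[OF pq(3)])
      show "?ren q \<in> lnodes ?s" by (rule ren_ln[OF pq(4)])
      show "\<exists>x\<in>occR (?r (?ren p)). \<exists>y\<in>occR (?r (?ren q)). (x,y) \<in> (conn \<Theta> (pnodes ?s))\<^sup>*"
        unfolding pn_eq using xin yin pq(7) by blast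
    qed
  qed
  have L: "inv_lab \<Theta> ?s ?r" unfolding inv_lab_def
  proof
    fix k assume k: "k \<in> lnodes ?s"
    then have k0: "k \<in> lnodes s" "k \<noteq> m" by (auto simp: ms)
    show "lab ?s k = \<Union>(symsT \<Theta> ` ?r k)"
      using I(10)[OF k0(1)] I(10)[OF n] I(10)[OF m] k0 mn by (cases "k = n") (auto simp: ms)
  qed
  have Gt: "inv_gate ?s ?r" unfolding inv_gate_def
  proof (intro ballI impI)
    fix P k assume P: "P \<in> pnodes ?s" and k: "k \<in> lnodes ?s" and Pk: "P \<in> ?r k"
    then have k0: "k \<in> lnodes s" "k \<noteq> m" and P0: "P \<in> pnodes s" by (auto simp: ms)
    show "(k,P) \<in> dn ?s"
    proof (cases "k = n")
      case True
      then have "P \<in> reg n \<or> P \<in> reg m" using Pk by simp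
      then have "(n,P) \<in> dn s \<or> (m,P) \<in> dn s" using I(11)[OF P0 n] I(11)[OF P0 m] by blast
      then show ?thesis using True mn by (auto simp: ms ren_def)
    next
      case False
      then have "(k,P) \<in> dn s" using I(11)[OF P0 k0(1)] Pk by simp
      then show ?thesis using k0 by (auto simp: ms ren_def)
    qed
  qed
  have Cr: "inv_cross \<Theta> ?s ?r" unfolding inv_cross_def
  proof (intro ballI allI impI)
    fix k X Y x assume k: "k \<in> lnodes ?s" and X: "X \<in> ?r k" and Y: "Y \<in> \<Theta>" and Yn: "Y \<notin> ?r k"
      and xX: "x \<in> occ X" and xY: "x \<in> occ Y"
    then have k0: "k \<in> lnodes s" "k \<noteq> m" by (auto simp: ms)
    obtain j where j: "j \<in> lnodes s" "X \<in> reg j" "Y \<notin> reg j" "?ren j = k"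
      "k = n \<longrightarrow> Y \<notin> reg n \<and> Y \<notin> reg m" "k \<noteq> n \<longrightarrow> j = k"
    proof (cases "k = n")
      case True
      then have "X \<in> reg n \<or> X \<in> reg m" "Y \<notin> reg n" "Y \<notin> reg m" using X Yn by auto
      then show ?thesis using that[of n] that[of m] n m True by (auto simp: ren_def)
    next
      case False
      then show ?thesis using that[of k] X Yn k0 by (auto simp: ren_def)
    qed
    have c: "CROSS s reg j X Y x" using I(12)[OF j(1) j(2) Y j(3) xX xY] .
    show "CROSS ?s ?r k X Y x" unfolding CROSS_def
    proof -
      consider (c1) m' where "m' \<in> lnodes s" "Y \<in> reg m'" "{j,m'} \<in> le s"
        | (c2) "Y \<in> pnodes s" "x \<in> prems Y" "\<forall>b c. Y = ParL x b c \<longrightarrow> (j,Y) \<in> up s"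
        | (c3) "X \<in> pnodes s" "x \<in> prems X"
        using c unfolding CROSS_def by blast
      then show "(\<exists>m'\<in>lnodes ?s. Y \<in> ?r m' \<and> {k,m'} \<in> le ?s)
     \<or> (Y \<in> pnodes ?s \<and> x \<in> prems Y \<and> (\<forall>b c. Y = ParL x b c \<longrightarrow> (k,Y) \<in> up ?s))
     \<or> (X \<in> pnodes ?s \<and> x \<in> prems X)"
      proof cases
        case c1
        have ne: "{j,m'} \<noteq> {n,m}"
        proof
          assume h: "{j,m'} = {n,m}"
          then have "m' = n \<or> m' = m" "j = n \<or> j = m" by (auto simp: doubleton_eq_iff)
          then have "k = n" using j(6) k0(2) by auto
          then show False using j(5) c1(2) \<open>m' = n \<or> m' = m\<close> by auto
        qed
        have "{j,m'} \<in> le s - {{n,m}}" using c1(3) ne by blast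
        then have "?ren ` {j,m'} \<in> le ?s" unfolding ms(7) by (rule imageI)
        then have "{k, ?ren m'} \<in> le ?s" using j(4) by simp
        moreover have "Y \<in> ?r (?ren m')" using ren_reg c1(2) by blast
        ultimately show ?thesis using ren_ln[OF c1(1)] by blast
      next
        case c2
        have "(k,Y) \<in> up ?s" if "Y = ParL x b c" for b c
        proof -
          have "(j,Y) \<in> up s" using c2(3) that by blast
          then show ?thesis using j(4) by (auto simp: ms)
        qed
        then show ?thesis using c2 by (simp add: ms)
      next
        case c3
        then show ?thesis by (simp add: ms)
      qed
    qed
  qed
  have Cn: "inv_conn \<Theta> ?s ?r" unfolding inv_conn_def
  proof (intro ballI)
    fix k x y assume k: "k \<in> lnodes ?s" and x: "x \<in> occR (?r k)" and y: "y \<in> occR (?r k)"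
    then have k0: "k \<in> lnodes s" "k \<noteq> m" by (auto simp: ms)
    have pn_eq: "pnodes ?s = pnodes s" by (simp add: ms)
    show "(x,y) \<in> (conn \<Theta> (pnodes ?s))\<^sup>*"
    proof (cases "k = n")
      case False
      then show ?thesis using I(13)[OF k0(1)] x y pn_eq by simp
    next
      case True
      obtain p q u w where pq: "{n,m} = {p,q}" "u \<in> occR (reg p)" "w \<in> occR (reg q)"
        "(u,w) \<in> (conn \<Theta> (pnodes s))\<^sup>*"
        using I(9)[OF e] by blast
      obtain u' w' where uw: "u' \<in> occR (reg n)" "w' \<in> occR (reg m)" "(u',w') \<in> (conn \<Theta> (pnodes s))\<^sup>*"
      proof (cases "p = n")
        case True
        then have "q = m" using pq(1) mn by (auto simp: doubleton_eq_iff)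
        then show ?thesis using that pq True by blast
      next
        case False
        then have "p = m" "q = n" using pq(1) by (auto simp: doubleton_eq_iff)
        then show ?thesis using that[of w u] pq conn_sym[OF pq(4)] by simp
      qed
      have xs: "x \<in> occR (reg n) \<or> x \<in> occR (reg m)" using x True by (simp add: occR_Un)
      have ys: "y \<in> occR (reg n) \<or> y \<in> occR (reg m)" using y True by (simp add: occR_Un)
      have cn: "\<And>a b. a \<in> occR (reg n) \<Longrightarrow> b \<in> occR (reg n) \<Longrightarrow> (a,b) \<in> (conn \<Theta> (pnodes s))\<^sup>*"
        using I(13)[OF n] by blast
      have cm: "\<And>a b. a \<in> occR (reg m) \<Longrightarrow> b \<in> occR (reg m) \<Longrightarrow> (a,b) \<in> (conn \<Theta> (pnodes s))\<^sup>*"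
        using I(13)[OF m] by blast
      have "(x,y) \<in> (conn \<Theta> (pnodes s))\<^sup>*"
        using xs ys
      proof (elim disjE)
        assume "x \<in> occR (reg n)" "y \<in> occR (reg n)" then show ?thesis using cn by blast
      next
        assume "x \<in> occR (reg m)" "y \<in> occR (reg m)" then show ?thesis using cm by blast
      next
        assume h: "x \<in> occR (reg n)" "y \<in> occR (reg m)"
        have "(x,u') \<in> (conn \<Theta> (pnodes s))\<^sup>*" using cn h uw by blast
        moreover have "(w',y) \<in> (conn \<Theta> (pnodes s))\<^sup>*" using cm h uw by blast
        ultimately show ?thesis using uw(3) by (meson rtrancl_trans)
      next
        assume h: "x \<in> occR (reg m)" "y \<in> occR (reg n)"
        have "(x,w') \<in> (conn \<Theta> (pnodes s))\<^sup>*" using cm h uw by blast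
        moreover have "(u',y) \<in> (conn \<Theta> (pnodes s))\<^sup>*" using cn h uw by blast
        moreover have "(w',u') \<in> (conn \<Theta> (pnodes s))\<^sup>*" using conn_sym[OF uw(3)] .
        ultimately show ?thesis by (meson rtrancl_trans)
      qed
      then show ?thesis using pn_eq by simp
    qed
  qed
  show ?thesis using INVI[OF A B C D E F G H L Gt Cr Cn] .
qed

end


lemma pelim_simps:
  "lnodes (pelim s n L) = lnodes s"
  "pnodes (pelim s n L) = pnodes s - {L}"
  "act (pelim s n L) = act s"
  "lab (pelim s n L) = lab s"
  "up (pelim s n L) = {p \<in> up s. snd p \<noteq> L}"
  "dn (pelim s n L) = {p \<in> dn s. snd p \<noteq> L}"
  "le (pelim s n L) = le s \<union> {{n, m} |m. (m, L) \<in> dn s}"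
  by (simp_all add: pelim_def)

context PS
begin

lemma inv_pelim:
  assumes inv: "INV \<Theta> s reg" and tree: "is_tree (occs \<Theta>) (dr_edges \<Theta>)"
    and a: "act s = n" and n: "n \<in> lnodes s" and Lp: "L \<in> pnodes s" and upL: "(n,L) \<in> up s"
    and lL: "Lsym L \<in> lab s n" and rL: "Rsym L \<in> lab s n"
  shows "\<exists>reg'. INV \<Theta> (pelim s n L) reg'"
proof -
  note I = INVD[OF inv]
  let ?s = "pelim s n L"
  note ps = pelim_simps[of s n L]
  have LT: "L \<in> \<Theta>" "is_par L" using Lp I(6) by auto
  then obtain a b c where Ld: "L = ParL a b c" by (cases L) auto
  have "Lsym L \<in> \<Union>(symsT \<Theta> ` reg n)" using lL I(10)[OF n] by simp
  then obtain Xa where Xa0: "Xa \<in> reg n" "Lsym L \<in> symsT \<Theta> Xa" by blast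
  then have "\<exists>a' b' c'. L = ParL a' b' c' \<and> a' \<in> concl Xa" unfolding symsT_L by blast
  then have Xa: "Xa \<in> reg n" "a \<in> concl Xa" using Ld Xa0 by auto
  have "Rsym L \<in> \<Union>(symsT \<Theta> ` reg n)" using rL I(10)[OF n] by simp
  then obtain Xb where Xb0: "Xb \<in> reg n" "Rsym L \<in> symsT \<Theta> Xb" by blast
  then have "\<exists>a' b' c'. L = ParL a' b' c' \<and> b' \<in> concl Xb" unfolding symsT_R by blast
  then have Xb: "Xb \<in> reg n" "b \<in> concl Xb" using Ld Xb0 by auto
  have XaT: "Xa \<in> \<Theta>" "Xb \<in> \<Theta>" using Xa Xb I(3)[OF n] by auto
  have prodX: "Z \<in> reg n" if "x \<in> prems L" "Z \<in> \<Theta>" "x \<in> concl Z" for x Z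
  proof -
    have "x = a \<or> x = b" using that(1) Ld by simp
    then show ?thesis
    proof
      assume "x = a" then have "Z = Xa" using concl_uniq[OF that(2) XaT(1)] that(3) Xa(2) by simp
      then show ?thesis using Xa by simp
    next
      assume "x = b" then have "Z = Xb" using concl_uniq[OF that(2) XaT(2)] that(3) Xb(2) by simp
      then show ?thesis using Xb by simp
    qed
  qed
  have occL: "x \<in> prems L \<and> x \<in> concl Y \<or> x \<in> concl L \<and> x \<in> prems Y"
    if "Y \<in> \<Theta>" "Y \<noteq> L" "x \<in> occ L" "x \<in> occ Y" for x Y
  proof -
    have "\<not> (x \<in> concl L \<and> x \<in> concl Y)" using concl_uniq[OF that(1) LT(1)] that(2) by blast
    moreover have "\<not> (x \<in> prems L \<and> x \<in> prems Y)" using prems_uniq[OF that(1) LT(1)] that(2) by blast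
    ultimately show ?thesis using that(3,4) unfolding occ_def by blast
  qed
  have aocc: "a \<in> occR (reg n)" using Xa unfolding occR_def by blast
  have ac_conn: "(a,c) \<in> conn \<Theta> (pnodes s - {L})"
  proof -
    have "(a,c) \<in> ledges L" "L \<in> \<Theta> - (pnodes s - {L})" using LT(1) Ld by auto
    then show ?thesis unfolding conn_def by blast
  qed
  have cmono: "(x,y) \<in> (conn \<Theta> (pnodes ?s))\<^sup>*" if "(x,y) \<in> (conn \<Theta> (pnodes s))\<^sup>*" for x y
    using conn_mono[OF _ that, of "pnodes s - {L}"] by (simp add: ps)
  have pnT: "pnodes s \<subseteq> \<Theta>" using I(6) by auto
  have dn_own: "m \<noteq> n" if "(m,L) \<in> dn s" for m
  proof
    assume mn: "m = n"
    have "L \<in> reg n" using I(8)[OF that] mn by simp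
    then have "c \<in> occR (reg n)" using Ld unfolding occR_def by force
    then have "(a,c) \<in> (conn \<Theta> (pnodes s))\<^sup>*" using I(13)[OF n aocc] by blast
    then show False using pending_not_conn[OF tree pnT, of a b c] Lp Ld by simp
  qed
  show ?thesis
  proof (cases "\<exists>k\<in>lnodes s. L \<in> reg k")
    case True
    then obtain m0 where m0: "m0 \<in> lnodes s" "L \<in> reg m0" by blast
    have dn0: "(m0,L) \<in> dn s" using I(11)[OF Lp m0(1) m0(2)] .
    have le_new: "{n,m0} \<in> le ?s" using dn0 by (auto simp: ps)
    have A: "inv_act ?s" unfolding inv_act_def using I(1) by (simp add: ps)
    have B: "inv_reg \<Theta> ?s reg" unfolding inv_reg_def using I(2) I(3) by (simp add: ps)
    have C: "inv_disj ?s reg" unfolding inv_disj_def using I(4) by (simp add: ps)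
    have D: "inv_own \<Theta> ?s reg" unfolding inv_own_def
    proof
      fix X assume X: "X \<in> \<Theta>"
      show "(\<exists>m\<in>lnodes ?s. X \<in> reg m) \<or> (X \<in> pnodes ?s \<and> concl X \<subseteq> concls \<Theta>)"
        using I(5)[OF X] True by (cases "X = L") (auto simp: ps)
    qed
    have E: "inv_pn \<Theta> ?s" unfolding inv_pn_def using I(6) by (auto simp: ps)
    have F: "inv_up ?s" unfolding inv_up_def using I(7) by (auto simp: ps)
    have G: "inv_dn ?s reg" unfolding inv_dn_def using I(8) by (auto simp: ps)
    have H: "inv_le \<Theta> ?s reg" unfolding inv_le_def
    proof
      fix e assume "e \<in> le ?s"
      then have "e \<in> le s \<or> (\<exists>m. e = {n,m} \<and> (m,L) \<in> dn s)" by (auto simp: ps)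
      then show "\<exists>p q. e = {p,q} \<and> p \<noteq> q \<and> p \<in> lnodes ?s \<and> q \<in> lnodes ?s \<and>
        (\<exists>x\<in>occR (reg p). \<exists>y\<in>occR (reg q). (x,y) \<in> (conn \<Theta> (pnodes ?s))\<^sup>*)"
      proof
        assume "e \<in> le s"
        then obtain p q x y where pq: "e = {p,q}" "p \<noteq> q" "p \<in> lnodes s" "q \<in> lnodes s"
          "x \<in> occR (reg p)" "y \<in> occR (reg q)" "(x,y) \<in> (conn \<Theta> (pnodes s))\<^sup>*"
          using I(9) by blast
        then show ?thesis using cmono[OF pq(7)] by (auto simp: ps)
      next
        assume "\<exists>m. e = {n,m} \<and> (m,L) \<in> dn s"
        then obtain m where m: "e = {n,m}" "(m,L) \<in> dn s" by blast
        have mm: "m \<in> lnodes s" "L \<in> reg m" using I(8)[OF m(2)] by auto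
        have "c \<in> occR (reg m)" using mm Ld unfolding occR_def by force
        moreover have "(a,c) \<in> (conn \<Theta> (pnodes ?s))\<^sup>*" using ac_conn by (simp add: ps)
        ultimately show ?thesis using m(1) dn_own[OF m(2)] n mm(1) aocc by (auto simp: ps)
      qed
    qed
    have Lb: "inv_lab \<Theta> ?s reg" unfolding inv_lab_def using I(10) by (simp add: ps)
    have Gt: "inv_gate ?s reg" unfolding inv_gate_def using I(11) by (auto simp: ps)
    have Cr: "inv_cross \<Theta> ?s reg" unfolding inv_cross_def
    proof (intro ballI allI impI)
      fix k X Y x assume k: "k \<in> lnodes ?s" and X: "X \<in> reg k" and Y: "Y \<in> \<Theta>" and Yn: "Y \<notin> reg k"
        and xX: "x \<in> occ X" and xY: "x \<in> occ Y"
      have k0: "k \<in> lnodes s" using k by (simp add: ps)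
      have c: "CROSS s reg k X Y x" using I(12)[OF k0 X Y Yn xX xY] .
      consider (c1) m' where "m' \<in> lnodes s" "Y \<in> reg m'" "{k,m'} \<in> le s"
        | (c2) "Y \<in> pnodes s" "x \<in> prems Y" "\<forall>b c. Y = ParL x b c \<longrightarrow> (k,Y) \<in> up s"
        | (c3) "X \<in> pnodes s" "x \<in> prems X"
        using c unfolding CROSS_def by blast
      then show "CROSS ?s reg k X Y x"
      proof cases
        case c1
        then show ?thesis unfolding CROSS_def by (auto simp: ps)
      next
        case c2
        show ?thesis
        proof (cases "Y = L")
          case False
          then show ?thesis using c2 unfolding CROSS_def by (auto simp: ps)
        next
          case True
          have XL: "X \<noteq> L" using X Yn True by blast
          have XT: "X \<in> \<Theta>" using X I(3)[OF k0] by blast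
          have "x \<in> concl X" using occL[OF XT XL _ xX] c2(2) True xY
            prems_uniq[OF XT LT(1), of x] XL xX unfolding occ_def by blast
          then have "X \<in> reg n" using prodX[OF _ XT] c2(2) True by blast
          then have "k = n" using I(4)[OF k0 n] X by blast
          then show ?thesis unfolding CROSS_def using True m0 le_new by (auto simp: ps)
        qed
      next
        case c3
        show ?thesis
        proof (cases "X = L")
          case False
          then show ?thesis using c3 unfolding CROSS_def by (auto simp: ps)
        next
          case True
          have YL: "Y \<noteq> L" using X Yn True by blast
          have "x \<in> concl Y" using occL[OF Y YL _ xY] c3(2) True xX
            prems_uniq[OF Y LT(1), of x] YL unfolding occ_def by blast
          then have Yn': "Y \<in> reg n" using prodX[OF _ Y] c3(2) True by blast
          have "k = m0" using I(4)[OF k0 m0(1)] X m0(2) True by blast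
          then have "{k,n} \<in> le ?s" using le_new by (simp add: insert_commute)
          then show ?thesis unfolding CROSS_def using Yn' n by (auto simp: ps)
        qed
      qed
    qed
    have Cn: "inv_conn \<Theta> ?s reg" unfolding inv_conn_def
      using I(13) cmono by (simp add: ps)
    show ?thesis using INVI[OF A B C D E F G H Lb Gt Cr Cn] by blast
  next
    case False
    let ?r = "reg(n := insert L (reg n))"
    have Lown: "L \<notin> reg k" if "k \<in> lnodes s" for k using False that by blast
    have cc: "concl L \<subseteq> concls \<Theta>" using I(5)[OF LT(1)] False by blast
    have cC: "c \<in> concls \<Theta>" using cc Ld by simp
    have nodn: "(m,L) \<notin> dn s" for m using I(8) Lown by blast
    have reg_sub: "reg k \<subseteq> ?r k" for k by auto
    have A: "inv_act ?s" unfolding inv_act_def using I(1) by (simp add: ps)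
    have B: "inv_reg \<Theta> ?s ?r" unfolding inv_reg_def using I(2) I(3) LT(1) by (auto simp: ps)
    have C: "inv_disj ?s ?r" unfolding inv_disj_def
    proof (intro ballI impI)
      fix k k' assume k: "k \<in> lnodes ?s" and k': "k' \<in> lnodes ?s" and kk: "k \<noteq> k'"
      then have k0: "k \<in> lnodes s" "k' \<in> lnodes s" by (auto simp: ps)
      show "?r k \<inter> ?r k' = {}"
        using I(4)[OF k0 kk] Lown[OF k0(1)] Lown[OF k0(2)] kk by auto
    qed
    have D: "inv_own \<Theta> ?s ?r" unfolding inv_own_def
    proof
      fix X assume X: "X \<in> \<Theta>"
      show "(\<exists>m\<in>lnodes ?s. X \<in> ?r m) \<or> (X \<in> pnodes ?s \<and> concl X \<subseteq> concls \<Theta>)"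
      proof (cases "X = L")
        case True
        then show ?thesis using n by (auto simp: ps)
      next
        case False
        then show ?thesis using I(5)[OF X] reg_sub by (auto simp: ps)
      qed
    qed
    have E: "inv_pn \<Theta> ?s" unfolding inv_pn_def using I(6) by (auto simp: ps)
    have F: "inv_up ?s" unfolding inv_up_def using I(7) by (auto simp: ps)
    have G: "inv_dn ?s ?r" unfolding inv_dn_def
    proof (intro allI impI)
      fix m L' assume "(m,L') \<in> dn ?s"
      then have "(m,L') \<in> dn s" "L' \<noteq> L" by (auto simp: ps)
      then show "m \<in> lnodes ?s \<and> L' \<in> pnodes ?s \<and> L' \<in> ?r m" using I(8)[of m L'] reg_sub
        by (auto simp: ps)
    qed
    have le_eq: "le ?s = le s" using nodn by (auto simp: ps)
    have H: "inv_le \<Theta> ?s ?r" unfolding inv_le_def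
    proof
      fix e assume "e \<in> le ?s"
      then have "e \<in> le s" using le_eq by simp
      then obtain p q x y where pq: "e = {p,q}" "p \<noteq> q" "p \<in> lnodes s" "q \<in> lnodes s"
        "x \<in> occR (reg p)" "y \<in> occR (reg q)" "(x,y) \<in> (conn \<Theta> (pnodes s))\<^sup>*"
        using I(9) by blast
      have xin: "x \<in> occR (?r p)" and yin: "y \<in> occR (?r q)" using pq(5,6) occR_mono[OF reg_sub] by blast+
      have cm: "(x,y) \<in> (conn \<Theta> (pnodes ?s))\<^sup>*" using cmono[OF pq(7)] .
      have lp: "p \<in> lnodes ?s" "q \<in> lnodes ?s" using pq(3,4) by (simp_all add: ps)
      show "\<exists>p q. e = {p,q} \<and> p \<noteq> q \<and> p \<in> lnodes ?s \<and> q \<in> lnodes ?s \<and>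
        (\<exists>x\<in>occR (?r p). \<exists>y\<in>occR (?r q). (x,y) \<in> (conn \<Theta> (pnodes ?s))\<^sup>*)"
      proof (rule exI[where x=p], rule exI[where x=q], intro conjI)
        show "\<exists>x\<in>occR (?r p). \<exists>y\<in>occR (?r q). (x,y) \<in> (conn \<Theta> (pnodes ?s))\<^sup>*"
          using xin yin cm by blast
      qed (use pq lp in auto)
    qed
    have symL: "symsT \<Theta> L = {}"
    proof -
      have "\<not> leftp \<Theta> c C" "\<not> rightp \<Theta> c C" for C
        using cC unfolding concls_def leftp_def rightp_def by auto
      then show ?thesis unfolding symsT_def using Ld by auto
    qed
    have Lb: "inv_lab \<Theta> ?s ?r" unfolding inv_lab_def
    proof
      fix k assume "k \<in> lnodes ?s"
      then have k0: "k \<in> lnodes s" by (simp add: ps)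
      show "lab ?s k = \<Union>(symsT \<Theta> ` ?r k)" using I(10)[OF k0] symL by (auto simp: ps)
    qed
    have Gt: "inv_gate ?s ?r" unfolding inv_gate_def
    proof (intro ballI impI)
      fix P k assume P: "P \<in> pnodes ?s" and k: "k \<in> lnodes ?s" and Pk: "P \<in> ?r k"
      then have "P \<in> pnodes s" "P \<noteq> L" "k \<in> lnodes s" by (auto simp: ps)
      moreover then have "P \<in> reg k" using Pk by (cases "k = n") auto
      ultimately show "(k,P) \<in> dn ?s" using I(11) by (auto simp: ps)
    qed
    have Cr: "inv_cross \<Theta> ?s ?r" unfolding inv_cross_def
    proof (intro ballI allI impI)
      fix k X Y x assume k: "k \<in> lnodes ?s" and X: "X \<in> ?r k" and Y: "Y \<in> \<Theta>" and Yn: "Y \<notin> ?r k"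
        and xX: "x \<in> occ X" and xY: "x \<in> occ Y"
      have k0: "k \<in> lnodes s" using k by (simp add: ps)
      have XL: "X \<noteq> L"
      proof
        assume XL: "X = L"
        then have kn: "k = n" using X Lown[OF k0] by (cases "k = n") auto
        have YL: "Y \<noteq> L" using Yn kn by auto
        have "x \<in> prems L \<and> x \<in> concl Y \<or> x \<in> concl L \<and> x \<in> prems Y" using occL[OF Y YL _ xY] xX XL by blast
        then show False
        proof
          assume h: "x \<in> prems L \<and> x \<in> concl Y"
          then have "Y \<in> reg n" using prodX[OF _ Y] by blast
          then show False using Yn kn by simp
        next
          assume h: "x \<in> concl L \<and> x \<in> prems Y"
          then show False using cc Y unfolding concls_def by blast
        qed
      qed
      have YL: "Y \<noteq> L"
      proof
        assume YL: "Y = L"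
        have XT: "X \<in> \<Theta>" using X I(3)[OF k0] LT(1) by (cases "k = n") auto
        have "x \<in> prems L \<and> x \<in> concl X \<or> x \<in> concl L \<and> x \<in> prems X" using occL[OF XT XL _ xX] xY YL by blast
        then show False
        proof
          assume h: "x \<in> prems L \<and> x \<in> concl X"
          then have "X \<in> reg n" using prodX[OF _ XT] by blast
          moreover have "X \<in> reg k" using X XL by (cases "k = n") auto
          ultimately have "k = n" using I(4)[OF k0 n] by blast
          then show False using Yn YL by simp
        next
          assume h: "x \<in> concl L \<and> x \<in> prems X"
          then show False using cc XT unfolding concls_def by blast
        qed
      qed
      have X0: "X \<in> reg k" using X XL by (cases "k = n") auto
      have Y0: "Y \<notin> reg k" using Yn reg_sub by blast
      have c: "CROSS s reg k X Y x" using I(12)[OF k0 X0 Y Y0 xX xY] .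
      from c[unfolded CROSS_def] show "CROSS ?s ?r k X Y x"
      proof (elim disjE)
        assume "\<exists>m'\<in>lnodes s. Y \<in> reg m' \<and> {k,m'} \<in> le s"
        then obtain m' where m': "m' \<in> lnodes s" "Y \<in> reg m'" "{k,m'} \<in> le s" by blast
        have "Y \<in> ?r m'" using reg_sub m'(2) by blast
        moreover have "{k,m'} \<in> le ?s" using le_eq m'(3) by simp
        moreover have "m' \<in> lnodes ?s" using m'(1) by (simp add: ps)
        ultimately show ?thesis unfolding CROSS_def by blast
      next
        assume "Y \<in> pnodes s \<and> x \<in> prems Y \<and> (\<forall>b c. Y = ParL x b c \<longrightarrow> (k,Y) \<in> up s)"
        then show ?thesis unfolding CROSS_def using YL by (auto simp: ps)
      next
        assume "X \<in> pnodes s \<and> x \<in> prems X"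
        then show ?thesis unfolding CROSS_def using XL by (auto simp: ps)
      qed
    qed
    have Cn: "inv_conn \<Theta> ?s ?r" unfolding inv_conn_def
    proof (intro ballI)
      fix k x y assume k: "k \<in> lnodes ?s" and x: "x \<in> occR (?r k)" and y: "y \<in> occR (?r k)"
      have k0: "k \<in> lnodes s" using k by (simp add: ps)
      show "(x,y) \<in> (conn \<Theta> (pnodes ?s))\<^sup>*"
      proof (cases "k = n")
        case False
        then show ?thesis using I(13)[OF k0] x y cmono by simp
      next
        case True
        have oc: "occR (?r k) = insert c (occR (reg n))" using True Ld unfolding occR_def by auto
        have ac: "(a,c) \<in> (conn \<Theta> (pnodes ?s))\<^sup>*" using ac_conn by (auto simp: ps)
        have ca: "(c,a) \<in> (conn \<Theta> (pnodes ?s))\<^sup>*" using conn_sym[OF ac] .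
        have inn: "(u,w) \<in> (conn \<Theta> (pnodes ?s))\<^sup>*" if "u \<in> occR (reg n)" "w \<in> occR (reg n)" for u w
          using cmono I(13)[OF n that] by blast
        have xs: "x = c \<or> x \<in> occR (reg n)" "y = c \<or> y \<in> occR (reg n)" using x y oc by auto
        show ?thesis
        proof (cases "x = c")
          case True
          show ?thesis
          proof (cases "y = c")
            case True
            then show ?thesis using \<open>x = c\<close> by simp
          next
            case False
            then have "(a,y) \<in> (conn \<Theta> (pnodes ?s))\<^sup>*" using inn[OF aocc] xs(2) by blast
            then show ?thesis using ca True by (meson rtrancl_trans)
          qed
        next
          case False
          then have xn: "x \<in> occR (reg n)" using xs(1) by blast
          show ?thesis
          proof (cases "y = c")
            case True
            have "(x,a) \<in> (conn \<Theta> (pnodes ?s))\<^sup>*" using inn[OF xn aocc] .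
            then show ?thesis using ac True by (meson rtrancl_trans)
          next
            case False
            then show ?thesis using inn[OF xn] xs(2) by blast
          qed
        qed
      qed
    qed
    show ?thesis using INVI[OF A B C D E F G H Lb Gt Cr Cn] by blast
  qed
qed

end


definition reg0 :: "'o link set \<Rightarrow> 'o node \<Rightarrow> 'o link set" where
  "reg0 \<Theta> k = (case k of LN L \<Rightarrow> insert L {P\<in>\<Theta>. is_par P \<and> is_tens L \<and> concl P \<inter> prems L \<noteq> {}}
                          | XN P \<Rightarrow> {P})"

lemma reg0_LN: "P \<in> reg0 \<Theta> (LN L) \<longleftrightarrow> P = L \<or> (P \<in> \<Theta> \<and> is_par P \<and> is_tens L \<and> concl P \<inter> prems L \<noteq> {})"
  by (simp add: reg0_def)
lemma reg0_XN: "P' \<in> reg0 \<Theta> (XN P) \<longleftrightarrow> P' = P"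
  by (simp add: reg0_def)

lemma leT_I: "P \<in> \<Theta> \<Longrightarrow> C \<in> \<Theta> \<Longrightarrow> \<not> is_par P \<Longrightarrow> is_tens C \<Longrightarrow> x \<in> concl P \<Longrightarrow> x \<in> prems C \<Longrightarrow>
  {LN P, LN C} \<in> leT \<Theta>"
  unfolding leT_def by blast

lemma ln_LN: "LN L \<in> lnodesT \<Theta> \<longleftrightarrow> L \<in> \<Theta> \<and> \<not> is_par L"
  by (auto simp: lnodesT_def)
lemma ln_XN: "XN L \<in> lnodesT \<Theta> \<longleftrightarrow> L \<in> \<Theta> \<and> is_par L \<and> (\<exists>x\<in>concl L. parprem \<Theta> x)"
  by (auto simp: lnodesT_def)

lemma T_init_simps:
  "lnodes (T_init \<Theta> n0) = lnodesT \<Theta>" "pnodes (T_init \<Theta> n0) = {L \<in> \<Theta>. is_par L}"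
  "lab (T_init \<Theta> n0) = labT \<Theta>" "up (T_init \<Theta> n0) = upT \<Theta>" "dn (T_init \<Theta> n0) = dnT \<Theta>"
  "le (T_init \<Theta> n0) = leT \<Theta>" "act (T_init \<Theta> n0) = n0"
  by (simp_all add: T_init_def)

lemma concl_par: "is_par P \<Longrightarrow> \<exists>a b c. P = ParL a b c" by (cases P) auto

lemma ledges_conn_nonpar:
  assumes "\<not> is_par K" "x \<in> occ K" "y \<in> occ K"
  shows "(x,y) \<in> (ledges K)\<^sup>*"
proof (cases K)
  case (Ax a b)
  then show ?thesis using assms by (auto simp: occ_def)
next
  case (TensL p q c)
  have pc: "(p,c) \<in> (ledges K)\<^sup>*" "(c,p) \<in> (ledges K)\<^sup>*" "(q,c) \<in> (ledges K)\<^sup>*" "(c,q) \<in> (ledges K)\<^sup>*"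
    using TensL by auto
  have xs: "x = p \<or> x = q \<or> x = c" "y = p \<or> y = q \<or> y = c" using assms TensL by (auto simp: occ_def)
  have "(x,c) \<in> (ledges K)\<^sup>*" using xs(1) pc by auto
  moreover have "(c,y) \<in> (ledges K)\<^sup>*" using xs(2) pc by auto
  ultimately show ?thesis by (meson rtrancl_trans)
next
  case (ParL a b c)
  then show ?thesis using assms by simp
qed

context PS
begin

lemma nonpar_owner:
  assumes "k \<in> lnodesT \<Theta>" "X \<in> reg0 \<Theta> k" "\<not> is_par X"
  shows "k = LN X"
proof (cases k)
  case (LN L)
  then show ?thesis using assms by (auto simp: reg0_LN)
next
  case (XN P)
  then have "is_par P" using assms(1) by (auto simp: ln_LN ln_XN)
  then show ?thesis using assms XN by (auto simp: reg0_XN)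
qed

lemma par_concl_prem:
  assumes "P \<in> \<Theta>" "is_par P" "x \<in> concl P" "y \<in> concl P"
  shows "x = y" using assms by (cases P) auto

lemma init_disj:
  assumes k: "k \<in> lnodesT \<Theta>" and k': "k' \<in> lnodesT \<Theta>" and kk: "k \<noteq> k'"
  shows "reg0 \<Theta> k \<inter> reg0 \<Theta> k' = {}"
proof (rule ccontr)
  assume "reg0 \<Theta> k \<inter> reg0 \<Theta> k' \<noteq> {}"
  then obtain X where X: "X \<in> reg0 \<Theta> k" "X \<in> reg0 \<Theta> k'" by blast
  show False
  proof (cases "is_par X")
    case False
    then show False using nonpar_owner[OF k X(1)] nonpar_owner[OF k' X(2)] kk by simp
  next
    case True
    then obtain a b c where Xd: "X = ParL a b c" using concl_par by blast
    have own: "(\<exists>L. k = LN L \<and> is_tens L \<and> L \<in> \<Theta> \<and> c \<in> prems L) \<or> (k = XN X \<and> parprem \<Theta> c)"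
      if "k \<in> lnodesT \<Theta>" "X \<in> reg0 \<Theta> k" for k
    proof (cases k)
      case (LN L)
      then have "X \<noteq> L" using that True by (auto simp: ln_LN ln_XN)
      then show ?thesis using that LN Xd by (auto simp: reg0_LN ln_LN)
    next
      case (XN P)
      then show ?thesis using that Xd by (auto simp: reg0_XN ln_XN)
    qed
    have tens_np: "\<not> parprem \<Theta> c" if "is_tens L" "L \<in> \<Theta>" "c \<in> prems L" for L
    proof
      assume "parprem \<Theta> c"
      then obtain C where "C \<in> \<Theta>" "\<exists>b' c'. C = ParL c b' c' \<or> C = ParL b' c c'"
        unfolding parprem_def leftp_def rightp_def by blast
      then obtain b' c' where C: "C \<in> \<Theta>" "C = ParL c b' c' \<or> C = ParL b' c c'" by blast
      have "c \<in> prems C" using C by auto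
      then have "C = L" using prems_uniq[OF C(1) that(2)] that(3) by blast
      then show False using C that(1) by auto
    qed
    from own[OF k X(1)] own[OF k' X(2)] show False
    proof (elim disjE exE conjE)
      fix L L' assume "k = LN L" "is_tens L" "L \<in> \<Theta>" "c \<in> prems L" "k' = LN L'" "is_tens L'" "L' \<in> \<Theta>" "c \<in> prems L'"
      then show False using prems_uniq kk by blast
    next
      fix L assume "k = LN L" "is_tens L" "L \<in> \<Theta>" "c \<in> prems L" "parprem \<Theta> c"
      then show False using tens_np by blast
    next
      fix L assume "k' = LN L" "is_tens L" "L \<in> \<Theta>" "c \<in> prems L" "parprem \<Theta> c"
      then show False using tens_np by blast
    next
      assume "k = XN X" "k' = XN X" then show False using kk by simp
    qed
  qed
qed

lemma init_INV:
  assumes n0: "n0 \<in> lnodesT \<Theta>"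
  shows "INV \<Theta> (T_init \<Theta> n0) (reg0 \<Theta>)"
proof -
  let ?s = "T_init \<Theta> n0"
  let ?r = "reg0 \<Theta>"
  note ts = T_init_simps[of \<Theta> n0]
  have regT: "?r k \<subseteq> \<Theta>" if "k \<in> lnodesT \<Theta>" for k
    using that by (cases k) (auto simp: reg0_LN reg0_XN ln_LN ln_XN)
  have A: "inv_act ?s" unfolding inv_act_def using n0 by (simp add: ts)
  have B: "inv_reg \<Theta> ?s ?r" unfolding inv_reg_def
  proof
    fix k assume "k \<in> lnodes ?s"
    then have k: "k \<in> lnodesT \<Theta>" by (simp add: ts)
    have "?r k \<noteq> {}" by (cases k) (auto simp: reg0_def)
    then show "?r k \<noteq> {} \<and> ?r k \<subseteq> \<Theta>" using regT[OF k] by blast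
  qed
  have C: "inv_disj ?s ?r" unfolding inv_disj_def using init_disj by (simp add: ts)
  have D: "inv_own \<Theta> ?s ?r" unfolding inv_own_def
  proof
    fix X assume X: "X \<in> \<Theta>"
    show "(\<exists>m\<in>lnodes ?s. X \<in> ?r m) \<or> (X \<in> pnodes ?s \<and> concl X \<subseteq> concls \<Theta>)"
    proof (cases "is_par X")
      case False
      then have "LN X \<in> lnodes ?s" "X \<in> ?r (LN X)" using X by (auto simp: ts ln_LN reg0_LN)
      then show ?thesis by blast
    next
      case True
      then obtain a b c where Xd: "X = ParL a b c" using concl_par by blast
      show ?thesis
      proof (cases "parprem \<Theta> c")
        case True
        then have "XN X \<in> lnodes ?s" "X \<in> ?r (XN X)" using X Xd by (auto simp: ts ln_XN reg0_XN)
        then show ?thesis by blast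
      next
        case False
        show ?thesis
        proof (cases "\<exists>L\<in>\<Theta>. c \<in> prems L")
          case True
          then obtain L where L: "L \<in> \<Theta>" "c \<in> prems L" by blast
          have "\<not> is_par L"
          proof
            assume "is_par L"
            then obtain a' b' c' where "L = ParL a' b' c'" using concl_par by blast
            then have "parprem \<Theta> c" using L unfolding parprem_def leftp_def rightp_def by auto
            then show False using False by simp
          qed
          moreover have "is_tens L" using L calculation by (cases L) auto
          ultimately have "LN L \<in> lnodes ?s" "X \<in> ?r (LN L)" using L X Xd \<open>is_par X\<close>
            by (auto simp: ts ln_LN reg0_LN)
          then show ?thesis by blast
        next
          case False
          have "c \<in> concl X" using Xd by simp
          then have "c \<in> occs \<Theta>" using X unfolding occs_def by blast
          then have "concl X \<subseteq> concls \<Theta>" using False Xd unfolding concls_def by auto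
          then show ?thesis using X \<open>is_par X\<close> by (simp add: ts)
        qed
      qed
    qed
  qed
  have E: "inv_pn \<Theta> ?s" unfolding inv_pn_def by (simp add: ts)
  have F: "inv_up ?s" unfolding inv_up_def
  proof (intro allI impI)
    fix m L assume "(m,L) \<in> up ?s"
    then have "(m,L) \<in> upT \<Theta>" by (simp add: ts)
    then consider (a) P where "m = LN P" "P \<in> \<Theta>" "\<not> is_par P" "\<exists>x\<in>concl P. leftp \<Theta> x L"
      | (b) P where "m = XN P" "P \<in> \<Theta>" "is_par P" "\<exists>x\<in>concl P. leftp \<Theta> x L"
      unfolding upT_def by blast
    then show "m \<in> lnodes ?s \<and> L \<in> pnodes ?s"
    proof cases
      case a
      then obtain x where x: "leftp \<Theta> x L" by blast
      then have "L \<in> \<Theta>" "is_par L" unfolding leftp_def by auto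
      then show ?thesis using a by (simp add: ts ln_LN)
    next
      case b
      then obtain x where x: "x \<in> concl P" "leftp \<Theta> x L" by blast
      then have "L \<in> \<Theta>" "is_par L" unfolding leftp_def by auto
      moreover have "parprem \<Theta> x" using x(2) unfolding parprem_def by blast
      ultimately show ?thesis using b x(1) by (auto simp: ts ln_XN)
    qed
  qed
  have G: "inv_dn ?s ?r" unfolding inv_dn_def
  proof (intro allI impI)
    fix m L assume "(m,L) \<in> dn ?s"
    then have "(m,L) \<in> dnT \<Theta>" by (simp add: ts)
    then show "m \<in> lnodes ?s \<and> L \<in> pnodes ?s \<and> L \<in> ?r m"
      unfolding dnT_def ts lnodesT_def by (auto simp: reg0_def elim: is_tens.elims)
  qed
  have H: "inv_le \<Theta> ?s ?r" unfolding inv_le_def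
  proof
    fix e assume "e \<in> le ?s"
    then obtain P C where PC: "e = {LN P, LN C}" "P \<in> \<Theta>" "C \<in> \<Theta>" "\<not> is_par P" "is_tens C"
      "concl P \<inter> prems C \<noteq> {}" by (auto simp: ts leT_def)
    obtain x where x: "x \<in> concl P" "x \<in> prems C" using PC(6) by blast
    have PCne: "P \<noteq> C" using cp[OF PC(3)] x by blast
    obtain p q c where Cd: "C = TensL p q c" using PC(5) by (cases C) auto
    have "x \<in> occR (?r (LN P))" using x(1) unfolding occR_def by (auto simp: reg0_LN)
    moreover have "c \<in> occR (?r (LN C))"
    proof -
      have "C \<in> ?r (LN C)" by (simp add: reg0_LN)
      moreover have "c \<in> concl C" using Cd by simp
      ultimately show ?thesis unfolding occR_def by blast
    qed
    moreover have "(x,c) \<in> conn \<Theta> (pnodes ?s)"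
    proof -
      have "(x,c) \<in> ledges C" using x(2) Cd by auto
      moreover have "C \<in> \<Theta> - pnodes ?s" using PC(3) Cd by (simp add: ts)
      ultimately show ?thesis unfolding conn_def by blast
    qed
    moreover have "LN P \<in> lnodes ?s" "LN C \<in> lnodes ?s" using PC Cd by (auto simp: ts ln_LN)
    ultimately show "\<exists>p q. e = {p,q} \<and> p \<noteq> q \<and> p \<in> lnodes ?s \<and> q \<in> lnodes ?s \<and>
        (\<exists>x\<in>occR (?r p). \<exists>y\<in>occR (?r q). (x,y) \<in> (conn \<Theta> (pnodes ?s))\<^sup>*)"
      using PC(1) PCne by blast
  qed
  have symsT_into_tens: "symsT \<Theta> P = {}" if h: "P \<in> \<Theta>" "is_par P" "is_tens L" "L \<in> \<Theta>" "concl P \<inter> prems L \<noteq> {}" for P L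
  proof -
    obtain x where x: "x \<in> concl P" "x \<in> prems L" using h(5) by blast
    have "concl P = {x}" using x(1) h(2) by (cases P) auto
    moreover have "\<not> leftp \<Theta> x C \<and> \<not> rightp \<Theta> x C" for C
    proof -
      have "C = L" if "C \<in> \<Theta>" "x \<in> prems C" for C using prems_uniq[OF that(1) h(4) that(2) x(2)] .
      then show ?thesis using h(3) unfolding leftp_def rightp_def by auto
    qed
    ultimately show ?thesis unfolding symsT_def by auto
  qed
  have Lb: "inv_lab \<Theta> ?s ?r" unfolding inv_lab_def
  proof
    fix k assume "k \<in> lnodes ?s"
    then have k: "k \<in> lnodesT \<Theta>" by (simp add: ts)
    show "lab ?s k = \<Union>(symsT \<Theta> ` ?r k)"
    proof (cases k)
      case (LN L)
      have LT: "L \<in> \<Theta>" using k LN by (auto simp: ln_LN ln_XN)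
      have eq: "?r k = insert L {P\<in>\<Theta>. is_par P \<and> is_tens L \<and> concl P \<inter> prems L \<noteq> {}}"
        using LN by (simp add: reg0_def)
      have e: "symsT \<Theta> P = {}" if "P \<in> {P\<in>\<Theta>. is_par P \<and> is_tens L \<and> concl P \<inter> prems L \<noteq> {}}" for P
        using symsT_into_tens[of P L] LT that by blast
      have "\<Union>(symsT \<Theta> ` ?r k) = symsT \<Theta> L"
        unfolding eq using e by auto
      then show ?thesis using LN by (simp add: ts)
    next
      case (XN P)
      then show ?thesis by (simp add: ts reg0_def)
    qed
  qed
  have Gt: "inv_gate ?s ?r" unfolding inv_gate_def
  proof (intro ballI impI)
    fix P k assume P: "P \<in> pnodes ?s" and k: "k \<in> lnodes ?s" and Pk: "P \<in> ?r k"
    have Pp: "P \<in> \<Theta>" "is_par P" using P by (auto simp: ts)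
    have k0: "k \<in> lnodesT \<Theta>" using k by (simp add: ts)
    show "(k,P) \<in> dn ?s"
    proof (cases k)
      case (LN L)
      then have "L \<in> \<Theta>" "\<not> is_par L" using k0 by (auto simp: ln_LN ln_XN)
      then have "P \<noteq> L" using Pp by auto
      then have "is_tens L" "concl P \<inter> prems L \<noteq> {}" using Pk LN by (auto simp: reg0_LN)
      then show ?thesis using LN Pp \<open>L \<in> \<Theta>\<close> by (auto simp: ts dnT_def)
    next
      case (XN P')
      then have "P = P'" using Pk by (simp add: reg0_XN)
      then show ?thesis using XN k0 ln_XN Pp by (auto simp: ts dnT_def)
    qed
  qed
  have Cr: "inv_cross \<Theta> ?s ?r" unfolding inv_cross_def
  proof (intro ballI allI impI)
    fix k X Y x assume k: "k \<in> lnodes ?s" and X: "X \<in> ?r k" and Y: "Y \<in> \<Theta>" and Yn: "Y \<notin> ?r k"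
      and xX: "x \<in> occ X" and xY: "x \<in> occ Y"
    have k0: "k \<in> lnodesT \<Theta>" using k by (simp add: ts)
    have XT: "X \<in> \<Theta>" using regT[OF k0] X by blast
    have XY: "X \<noteq> Y" using X Yn by blast
    have roles: "(x \<in> concl X \<and> x \<in> prems Y) \<or> (x \<in> prems X \<and> x \<in> concl Y)"
    proof -
      have "\<not> (x \<in> concl X \<and> x \<in> concl Y)" using concl_uniq[OF XT Y] XY by blast
      moreover have "\<not> (x \<in> prems X \<and> x \<in> prems Y)" using prems_uniq[OF XT Y] XY by blast
      ultimately show ?thesis using xX xY unfolding occ_def by blast
    qed
    then show "CROSS ?s ?r k X Y x"
    proof
      assume h: "x \<in> concl X \<and> x \<in> prems Y"
      show ?thesis
      proof (cases Y)
        case (Ax a' b')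
        then show ?thesis using h by simp
      next
        case (ParL a' b' c')
        have up: "(k,Y) \<in> up ?s" if "x = a'"
        proof (cases k)
          case (LN L)
          have LT: "L \<in> \<Theta>" "\<not> is_par L" using k0 LN by (auto simp: ln_LN ln_XN)
          have "X = L"
          proof (rule ccontr)
            assume "X \<noteq> L"
            then have "is_tens L" "concl X \<inter> prems L \<noteq> {}" "is_par X" using X LN by (auto simp: reg0_LN)
            moreover have "concl X = {x}" using h calculation(3) by (cases X) auto
            ultimately have "x \<in> prems L" by auto
            then have "L = Y" using prems_uniq[OF LT(1) Y] h by blast
            then show False using LT ParL by simp
          qed
          then show ?thesis using LN LT h that ParL Y
            by (auto simp: ts upT_def leftp_def)
        next
          case (XN P)
          then have "X = P" "is_par P" using X k0 ln_XN by (auto simp: reg0_XN)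
          then show ?thesis using XN XT h that ParL Y
            by (auto simp: ts upT_def leftp_def)
        qed
        show ?thesis unfolding CROSS_def using up ParL Y h by (auto simp: ts)
      next
        case (TensL p' q' c')
        have Yl: "LN Y \<in> lnodes ?s" "Y \<in> ?r (LN Y)" using Y TensL by (auto simp: ts ln_LN reg0_LN)
        show ?thesis
        proof (cases "is_par X")
          case False
          then have kX: "k = LN X" using nonpar_owner[OF k0 X] by simp
          have "{LN X, LN Y} \<in> leT \<Theta>" using leT_I[OF XT Y False _, of x] TensL h by simp
          then show ?thesis unfolding CROSS_def using Yl kX by (auto simp: ts)
        next
          case True
          then have "X \<in> ?r (LN Y)" using XT Y TensL h by (auto simp: reg0_LN)
          then have "k = LN Y" using init_disj[OF k0, of "LN Y"] Yl X by (auto simp: ts)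
          then show ?thesis using Yn Yl by simp
        qed
      qed
    next
      assume h: "x \<in> prems X \<and> x \<in> concl Y"
      show ?thesis
      proof (cases X)
        case (Ax a' b')
        then show ?thesis using h by simp
      next
        case (ParL a' b' c')
        then show ?thesis unfolding CROSS_def using h XT by (auto simp: ts)
      next
        case (TensL p' q' c')
        then have kX: "k = LN X" using nonpar_owner[OF k0 X] by simp
        show ?thesis
        proof (cases "is_par Y")
          case False
          have Yl: "LN Y \<in> lnodes ?s" "Y \<in> ?r (LN Y)" using Y False by (auto simp: ts ln_LN reg0_LN)
          have "{LN Y, LN X} \<in> leT \<Theta>" using leT_I[OF Y XT False _, of x] TensL h by simp
          then have "{LN X, LN Y} \<in> leT \<Theta>" by (simp add: insert_commute)
          then show ?thesis unfolding CROSS_def using Yl kX by (auto simp: ts)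
        next
          case True
          then have "Y \<in> ?r (LN X)" using XT Y TensL h by (auto simp: reg0_LN)
          then show ?thesis using Yn kX by simp
        qed
      qed
    qed
  qed
  have Cn: "inv_conn \<Theta> ?s ?r" unfolding inv_conn_def
  proof (intro ballI)
    fix k x y assume k: "k \<in> lnodes ?s" and x: "x \<in> occR (?r k)" and y: "y \<in> occR (?r k)"
    have k0: "k \<in> lnodesT \<Theta>" using k by (simp add: ts)
    show "(x,y) \<in> (conn \<Theta> (pnodes ?s))\<^sup>*"
    proof (cases k)
      case (XN P)
      then have "P \<in> \<Theta>" "is_par P" using k0 by (auto simp: ln_LN ln_XN)
      then have "x = y" using x y XN par_concl_prem unfolding occR_def by (auto simp: reg0_XN)
      then show ?thesis by simp
    next
      case (LN L)
      have LT: "L \<in> \<Theta>" "\<not> is_par L" using k0 LN by (auto simp: ln_LN ln_XN)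
      have sub: "occR (?r k) \<subseteq> occ L"
      proof
        fix z assume "z \<in> occR (?r k)"
        then obtain Z where Z: "Z \<in> ?r k" "z \<in> concl Z" unfolding occR_def by blast
        show "z \<in> occ L"
        proof (cases "Z = L")
          case True then show ?thesis using Z by (simp add: occ_def)
        next
          case False
          then have "is_par Z" "concl Z \<inter> prems L \<noteq> {}" using Z LN by (auto simp: reg0_LN)
          moreover have "concl Z = {z}" using Z(2) calculation(1) by (cases Z) auto
          ultimately show ?thesis by (auto simp: occ_def)
        qed
      qed
      have "(x,y) \<in> (ledges L)\<^sup>*" using ledges_conn_nonpar[OF LT(2)] sub x y by blast
      moreover have "ledges L \<subseteq> conn \<Theta> (pnodes ?s)" using LT unfolding conn_def ts by auto
      ultimately show ?thesis using rtrancl_mono by blast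
    qed
  qed
  show ?thesis using INVI[OF A B C D E F G H Lb Gt Cr Cn] .
qed

end


lemma inv_jump:
  assumes inv: "INV \<Theta> s reg" and m: "m \<in> lnodes s"
  shows "INV \<Theta> (s\<lparr>act := m\<rparr>) reg"
proof -
  note E = INVE[OF inv]
  let ?s = "s\<lparr>act := m\<rparr>"
  have cr: "CROSS ?s = CROSS s" unfolding CROSS_def by (intro ext) simp
  show ?thesis
  proof (rule INVI)
    show "inv_act ?s" unfolding inv_act_def using m by simp
    show "inv_reg \<Theta> ?s reg" using E(2) unfolding inv_reg_def by simp
    show "inv_disj ?s reg" using E(3) unfolding inv_disj_def by simp
    show "inv_own \<Theta> ?s reg" using E(4) unfolding inv_own_def by simp
    show "inv_pn \<Theta> ?s" using E(5) unfolding inv_pn_def by simp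
    show "inv_up ?s" using E(6) unfolding inv_up_def by simp
    show "inv_dn ?s reg" using E(7) unfolding inv_dn_def by simp
    show "inv_le \<Theta> ?s reg" using E(8) unfolding inv_le_def by simp
    show "inv_lab \<Theta> ?s reg" using E(9) unfolding inv_lab_def by simp
    show "inv_gate ?s reg" using E(10) unfolding inv_gate_def by simp
    show "inv_cross \<Theta> ?s reg" using E(11) unfolding inv_cross_def cr by simp
    show "inv_conn \<Theta> ?s reg" using E(12) unfolding inv_conn_def by simp
  qed
qed

context PS
begin

lemma inv_step:
  assumes st: "astep s k s'" and inv: "INV \<Theta> s reg" and tree: "is_tree (occs \<Theta>) (dr_edges \<Theta>)"
  shows "\<exists>reg'. INV \<Theta> s' reg'"
  using st
proof cases
  case (par_elim n L)
  then show ?thesis using inv_pelim[OF inv tree] by blast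
next
  case (union n m)
  then show ?thesis using inv_union[OF inv] by blast
next
  case (local_jump n L m)
  then show ?thesis using inv_jump[OF inv] by blast
qed

lemma inv_runs:
  assumes "runs s J t" "INV \<Theta> s reg" "is_tree (occs \<Theta>) (dr_edges \<Theta>)"
  shows "\<exists>reg'. INV \<Theta> t reg'"
  using assms(1,2)
proof (induction arbitrary: reg rule: runs.induct)
  case (runs_refl s)
  then show ?case by blast
next
  case (runs_other s s' J t)
  then obtain reg' where "INV \<Theta> s' reg'" using inv_step[OF _ _ assms(3)] by blast
  then show ?case using runs_other.IH by blast
next
  case (runs_jump s L s' J t)
  then obtain reg' where "INV \<Theta> s' reg'" using inv_step[OF _ _ assms(3)] by blast
  then show ?case using runs_jump.IH by blast
qed

end

theorem lemma1:
  fixes fm :: "'o \<Rightarrow> form" and \<Theta> :: "'o link set"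
  assumes "proof_structure fm \<Theta>"
    and "algA_no_at_step5 \<Theta>"
  shows "\<not> proof_net fm \<Theta>"
proof
  assume pn: "proof_net fm \<Theta>"
  interpret PS fm \<Theta> using assms(1) by unfold_locales
  have Td: "T_defined \<Theta>" using assms(2) unfolding algA_no_at_step5_def by blast
  then have tree: "is_tree (occs \<Theta>) (dr_edges \<Theta>)" unfolding T_defined_def by blast
  obtain n0 J t where r: "n0 \<in> lnodesT \<Theta>" "runs (T_init \<Theta> n0) J t" "irreducible t" "\<not> accepting \<Theta> t"
    using assms(2) unfolding algA_no_at_step5_def by blast
  obtain reg where "INV \<Theta> t reg" using inv_runs[OF r(2) init_INV[OF r(1)] tree] by blast
  then have "accepting \<Theta> t" using stuck_accepting[OF pn _ r(3)] by blast
  then show False using r(4) by blast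
qed

end
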